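(* Let $F\colon\mathbf{PBoolean}^{\mathrm{op}}\to\mathbf{Loc}$ be any functor whose restriction to boolean algebras is naturally isomorphic to the Stone spectrum functor $B\mapsto\mathrm{Idl}(B)$. Then $F(\mathrm{Proj}(M_n(\mathbb{C})))$ is the trivial locale for every $n\ge 3$.
   Context: A partial boolean algebra is a set $A$ with a reflexive symmetric relation $\odot$ (commeasurability), elements $0,1$ commeasurable with everything, a total unary operation $\neg$, and binary operations $\wedge,\vee$ defined on commeasurable pairs, such that every set of pairwise commeasurable elements is contained in a set of pairwise commeasurable elements which is closed under the operations and forms a boolean algebra under them. $\mathbf{PBoolean}$ is the category of partial boolean algebras with maps preserving commeasurability and the (partial) operations. Boolean algebras are the partial boolean algebras in which all pairs are commeasurable. $\mathrm{Proj}(M_n(\mathbb{C}))$ is the partial boolean algebra of projections $p=p^*=p^2$ in the $n\times n$ complex matrices, with $p\odot q$ iff $pq=qp$, $\neg p=1-p$, $p\wedge q=pq$, $p\vee q=p+q-pq$. The Stone spectrum of a boolean algebra $B$ is the locale whose frame is the frame $\mathrm{Idl}(B)$ of ideals of $B$. $\mathbf{Loc}$ is the category of locales; a locale is trivial if its frame satisfies $0=1$. *)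

theory Defs
  imports "HOL-Library.FuncSet" "Jordan_Normal_Form.Matrix"
begin

record 'a pba =
  pcarrier :: "'a set"
  pcomm :: "'a \<Rightarrow> 'a \<Rightarrow> bool"
  pzero :: 'a
  pone :: 'a
  pneg :: "'a \<Rightarrow> 'a"
  pmeet :: "'a \<Rightarrow> 'a \<Rightarrow> 'a"
  pjoin :: "'a \<Rightarrow> 'a \<Rightarrow> 'a"

definition is_BA_on :: "('a, 'b) pba_scheme \<Rightarrow> 'a set \<Rightarrow> bool" where
  "is_BA_on A T \<longleftrightarrow>
     T \<subseteq> pcarrier A \<and>
     (\<forall>x\<in>T. \<forall>y\<in>T. pcomm A x y) \<and>
     pzero A \<in> T \<and> pone A \<in> T \<and>
     (\<forall>x\<in>T. pneg A x \<in> T) \<and>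
     (\<forall>x\<in>T. \<forall>y\<in>T. pmeet A x y \<in> T \<and> pjoin A x y \<in> T) \<and>
     (\<forall>x\<in>T. \<forall>y\<in>T. pmeet A x y = pmeet A y x \<and> pjoin A x y = pjoin A y x) \<and>
     (\<forall>x\<in>T. \<forall>y\<in>T. \<forall>z\<in>T.
        pmeet A x (pjoin A y z) = pjoin A (pmeet A x y) (pmeet A x z) \<and>
        pjoin A x (pmeet A y z) = pmeet A (pjoin A x y) (pjoin A x z)) \<and>
     (\<forall>x\<in>T. pmeet A x (pone A) = x \<and> pjoin A x (pzero A) = x) \<and>
     (\<forall>x\<in>T. pmeet A x (pneg A x) = pzero A \<and> pjoin A x (pneg A x) = pone A)"

definition is_pba :: "('a, 'b) pba_scheme \<Rightarrow> bool" where
  "is_pba A \<longleftrightarrow>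
     pzero A \<in> pcarrier A \<and> pone A \<in> pcarrier A \<and>
     (\<forall>x\<in>pcarrier A. pcomm A x x) \<and>
     (\<forall>x\<in>pcarrier A. \<forall>y\<in>pcarrier A. pcomm A x y \<longrightarrow> pcomm A y x) \<and>
     (\<forall>x\<in>pcarrier A. pcomm A (pzero A) x \<and> pcomm A (pone A) x) \<and>
     (\<forall>x\<in>pcarrier A. pneg A x \<in> pcarrier A) \<and>
     (\<forall>x\<in>pcarrier A. \<forall>y\<in>pcarrier A. pcomm A x y \<longrightarrow>
        pmeet A x y \<in> pcarrier A \<and> pjoin A x y \<in> pcarrier A) \<and>
     (\<forall>S. S \<subseteq> pcarrier A \<longrightarrow> (\<forall>x\<in>S. \<forall>y\<in>S. pcomm A x y) \<longrightarrow>
        (\<exists>T. S \<subseteq> T \<and> is_BA_on A T))"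

definition is_boolean :: "('a, 'b) pba_scheme \<Rightarrow> bool" where
  "is_boolean A \<longleftrightarrow> is_pba A \<and> (\<forall>x\<in>pcarrier A. \<forall>y\<in>pcarrier A. pcomm A x y)"

definition pba_hom :: "('a, 'b) pba_scheme \<Rightarrow> ('c, 'd) pba_scheme \<Rightarrow> ('a \<Rightarrow> 'c) \<Rightarrow> bool" where
  "pba_hom A B f \<longleftrightarrow>
     f \<in> pcarrier A \<rightarrow>\<^sub>E pcarrier B \<and>
     (\<forall>x\<in>pcarrier A. \<forall>y\<in>pcarrier A. pcomm A x y \<longrightarrow> pcomm B (f x) (f y)) \<and>
     f (pzero A) = pzero B \<and> f (pone A) = pone B \<and>
     (\<forall>x\<in>pcarrier A. f (pneg A x) = pneg B (f x)) \<and>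
     (\<forall>x\<in>pcarrier A. \<forall>y\<in>pcarrier A. pcomm A x y \<longrightarrow>
        f (pmeet A x y) = pmeet B (f x) (f y) \<and> f (pjoin A x y) = pjoin B (f x) (f y))"

section \<open>Frames (locales are represented by their frames; locale maps by frame homs
  in the opposite direction)\<close>

record 'f frame =
  fcarrier :: "'f set"
  fle :: "'f \<Rightarrow> 'f \<Rightarrow> bool"

definition is_lub :: "'f frame \<Rightarrow> 'f set \<Rightarrow> 'f \<Rightarrow> bool" where
  "is_lub L X s \<longleftrightarrow> s \<in> fcarrier L \<and> (\<forall>x\<in>X. fle L x s) \<and>
     (\<forall>u\<in>fcarrier L. (\<forall>x\<in>X. fle L x u) \<longrightarrow> fle L s u)"

definition is_glb :: "'f frame \<Rightarrow> 'f set \<Rightarrow> 'f \<Rightarrow> bool" where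
  "is_glb L X s \<longleftrightarrow> s \<in> fcarrier L \<and> (\<forall>x\<in>X. fle L s x) \<and>
     (\<forall>u\<in>fcarrier L. (\<forall>x\<in>X. fle L u x) \<longrightarrow> fle L u s)"

definition fSup :: "'f frame \<Rightarrow> 'f set \<Rightarrow> 'f" where
  "fSup L X = (THE s. is_lub L X s)"

definition fmeet :: "'f frame \<Rightarrow> 'f \<Rightarrow> 'f \<Rightarrow> 'f" where
  "fmeet L a b = (THE s. is_glb L {a, b} s)"

definition fbot :: "'f frame \<Rightarrow> 'f" where "fbot L = fSup L {}"
definition ftop :: "'f frame \<Rightarrow> 'f" where "ftop L = fSup L (fcarrier L)"

definition is_frame :: "'f frame \<Rightarrow> bool" where
  "is_frame L \<longleftrightarrow>
     (\<forall>x\<in>fcarrier L. fle L x x) \<and>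
     (\<forall>x\<in>fcarrier L. \<forall>y\<in>fcarrier L. fle L x y \<longrightarrow> fle L y x \<longrightarrow> x = y) \<and>
     (\<forall>x\<in>fcarrier L. \<forall>y\<in>fcarrier L. \<forall>z\<in>fcarrier L. fle L x y \<longrightarrow> fle L y z \<longrightarrow> fle L x z) \<and>
     (\<forall>X. X \<subseteq> fcarrier L \<longrightarrow> (\<exists>s. is_lub L X s)) \<and>
     (\<forall>a\<in>fcarrier L. \<forall>b\<in>fcarrier L. \<exists>s. is_glb L {a, b} s) \<and>
     (\<forall>a\<in>fcarrier L. \<forall>X. X \<subseteq> fcarrier L \<longrightarrow>
        fmeet L a (fSup L X) = fSup L ((\<lambda>x. fmeet L a x) ` X))"

definition frame_hom :: "'f frame \<Rightarrow> 'g frame \<Rightarrow> ('f \<Rightarrow> 'g) \<Rightarrow> bool" where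
  "frame_hom L M h \<longleftrightarrow>
     h \<in> fcarrier L \<rightarrow> fcarrier M \<and>
     h (ftop L) = ftop M \<and>
     (\<forall>a\<in>fcarrier L. \<forall>b\<in>fcarrier L. h (fmeet L a b) = fmeet M (h a) (h b)) \<and>
     (\<forall>X. X \<subseteq> fcarrier L \<longrightarrow> h (fSup L X) = fSup M (h ` X))"

text \<open>A locale is trivial iff in its frame 0 = 1.\<close>
definition trivial_frame :: "'f frame \<Rightarrow> bool" where
  "trivial_frame L \<longleftrightarrow> fbot L = ftop L"

section \<open>Stone spectrum: the frame of ideals\<close>

definition ideals :: "('a, 'b) pba_scheme \<Rightarrow> 'a set set" where
  "ideals B = {I. I \<subseteq> pcarrier B \<and> pzero B \<in> I \<and>
     (\<forall>a\<in>I. \<forall>b\<in>pcarrier B. pmeet B b a = b \<longrightarrow> b \<in> I) \<and>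
     (\<forall>a\<in>I. \<forall>b\<in>I. pjoin B a b \<in> I)}"

definition Idl :: "('a, 'b) pba_scheme \<Rightarrow> 'a set frame" where
  "Idl B = \<lparr>fcarrier = ideals B, fle = (\<subseteq>)\<rparr>"

text \<open>Action of the Stone spectrum on a morphism f : B \<rightarrow> B' (locale map
  Spec B' \<rightarrow> Spec B), as the frame hom Idl B \<rightarrow> Idl B' sending I to the ideal
  generated by f[I].\<close>
definition Idl_map :: "('a, 'b) pba_scheme \<Rightarrow> ('c, 'd) pba_scheme \<Rightarrow> ('a \<Rightarrow> 'c) \<Rightarrow> 'a set \<Rightarrow> 'c set" where
  "Idl_map B B' f I = {b \<in> pcarrier B'. \<exists>a\<in>I. pmeet B' b (f a) = b}"

section \<open>Functors PBoolean^op \<rightarrow> Loc, i.e. covariant functors into frames\<close>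

definition is_PBool_Loc_functor ::
  "('a pba \<Rightarrow> 'f frame) \<Rightarrow> ('a pba \<Rightarrow> 'a pba \<Rightarrow> ('a \<Rightarrow> 'a) \<Rightarrow> 'f \<Rightarrow> 'f) \<Rightarrow> bool" where
  "is_PBool_Loc_functor F Fm \<longleftrightarrow>
     (\<forall>A. is_pba A \<longrightarrow> is_frame (F A)) \<and>
     (\<forall>A B f. is_pba A \<longrightarrow> is_pba B \<longrightarrow> pba_hom A B f \<longrightarrow> frame_hom (F A) (F B) (Fm A B f)) \<and>
     (\<forall>A. is_pba A \<longrightarrow> (\<forall>x\<in>fcarrier (F A). Fm A A (restrict id (pcarrier A)) x = x)) \<and>
     (\<forall>A B C f g. is_pba A \<longrightarrow> is_pba B \<longrightarrow> is_pba C \<longrightarrow> pba_hom A B f \<longrightarrow> pba_hom B C g \<longrightarrow>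
        (\<forall>x\<in>fcarrier (F A). Fm A C (compose (pcarrier A) g f) x = Fm B C g (Fm A B f x)))"

definition nat_iso_to_Stone ::
  "('a pba \<Rightarrow> 'f frame) \<Rightarrow> ('a pba \<Rightarrow> 'a pba \<Rightarrow> ('a \<Rightarrow> 'a) \<Rightarrow> 'f \<Rightarrow> 'f) \<Rightarrow>
   ('a pba \<Rightarrow> 'f \<Rightarrow> 'a set) \<Rightarrow> bool" where
  "nat_iso_to_Stone F Fm \<eta> \<longleftrightarrow>
     (\<forall>B. is_boolean B \<longrightarrow>
        frame_hom (F B) (Idl B) (\<eta> B) \<and> bij_betw (\<eta> B) (fcarrier (F B)) (ideals B)) \<and>
     (\<forall>B B' f. is_boolean B \<longrightarrow> is_boolean B' \<longrightarrow> pba_hom B B' f \<longrightarrow>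
        (\<forall>x\<in>fcarrier (F B). \<eta> B' (Fm B B' f x) = Idl_map B B' f (\<eta> B x)))"

definition Proj :: "nat \<Rightarrow> complex mat pba" where
  "Proj n = \<lparr>pcarrier = {p \<in> carrier_mat n n.
                (\<forall>i<n. \<forall>j<n. p $$ (i, j) = cnj (p $$ (j, i))) \<and> p * p = p},
            pcomm = (\<lambda>p q. p * q = q * p),
            pzero = 0\<^sub>m n n,
            pone = 1\<^sub>m n,
            pneg = (\<lambda>p. 1\<^sub>m n - p),
            pmeet = (\<lambda>p q. p * q),
            pjoin = (\<lambda>p q. p + q - p * q)\<rparr>"

end

theory Submission
  imports Defs
begin
context ring begin
lemmas csimps = minus_eq r_distr l_distr r_minus l_minus a_ac m_assoc minus_add minus_minus
  r_one l_one r_zero l_zero r_neg r_neg1 r_neg2 l_neg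

lemma cp_meet_idem:
  assumes c: "p \<in> carrier R" "q \<in> carrier R" and i: "p \<otimes> p = p" "q \<otimes> q = q"
    and m: "p \<otimes> q = q \<otimes> p"
  shows "(p \<otimes> q) \<otimes> (p \<otimes> q) = p \<otimes> q"
proof -
  have "(p \<otimes> q) \<otimes> (p \<otimes> q) = p \<otimes> (q \<otimes> p) \<otimes> q" using c by (simp add: m_assoc)
  also have "\<dots> = p \<otimes> p \<otimes> q \<otimes> q" using c m by (simp add: m_assoc)
  finally show ?thesis using c i by (simp add: m_assoc)
qed

lemma cp_join_idem:
  assumes c: "p \<in> carrier R" "q \<in> carrier R" and i: "p \<otimes> p = p" "q \<otimes> q = q"
    and m: "p \<otimes> q = q \<otimes> p"
  shows "(p \<oplus> q \<ominus> p \<otimes> q) \<otimes> (p \<oplus> q \<ominus> p \<otimes> q) = p \<oplus> q \<ominus> p \<otimes> q"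
proof -
  have a: "p\<otimes>(q\<otimes>p) = p \<otimes> q" using c i m by (metis m_assoc)
  have b: "q\<otimes>(p\<otimes>q) = p\<otimes>q" using c i m by (metis m_assoc)
  have g: "q \<otimes> p = p \<otimes> q" using m by simp
  have h: "\<And>x. x \<in> carrier R \<Longrightarrow> p\<otimes>(p\<otimes>x) = p \<otimes> x" using c i by (metis m_assoc)
  have h2: "\<And>x. x \<in> carrier R \<Longrightarrow> q\<otimes>(q\<otimes>x) = q \<otimes> x" using c i by (metis m_assoc)
  have k: "p\<otimes>(q\<otimes>(p\<otimes>q)) = p\<otimes>q" using c i a by (metis m_assoc m_closed)
  show ?thesis using c apply (simp add: csimps a b g h h2 i k) by algebra
qed

lemma cp_neg_idem:
  assumes c: "p \<in> carrier R" and i: "p \<otimes> p = p"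
  shows "(\<one> \<ominus> p) \<otimes> (\<one> \<ominus> p) = \<one> \<ominus> p"
  using c apply (simp add: csimps i) by algebra

lemma cp_dist1:
  assumes c: "p \<in> carrier R" "q \<in> carrier R" "r \<in> carrier R"
  and i: "p \<otimes> p = p"
  and m: "p \<otimes> q = q \<otimes> p"
  shows "p \<otimes> (q \<oplus> r \<ominus> q \<otimes> r) = p \<otimes> q \<oplus> p \<otimes> r \<ominus> (p \<otimes> q) \<otimes> (p \<otimes> r)"
proof -
  have "(p \<otimes> q) \<otimes> (p \<otimes> r) = p \<otimes> (q \<otimes> r)"
  proof -
    have "(p \<otimes> q) \<otimes> (p \<otimes> r) = p \<otimes> (q \<otimes> p) \<otimes> r" using c by (simp add: m_assoc)
    also have "\<dots> = p \<otimes> p \<otimes> q \<otimes> r" using c m by (simp add: m_assoc)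
    finally show ?thesis using c i by (simp add: m_assoc)
  qed
  then show ?thesis using c apply (simp add: csimps) by algebra
qed

lemma cp_dist2:
  assumes c: "p \<in> carrier R" "q \<in> carrier R" "r \<in> carrier R"
  and i: "p \<otimes> p = p"
  and m: "p \<otimes> q = q \<otimes> p" "p \<otimes> r = r \<otimes> p"
  shows "p \<oplus> q \<otimes> r \<ominus> p \<otimes> (q \<otimes> r) = (p \<oplus> q \<ominus> p \<otimes> q) \<otimes> (p \<oplus> r \<ominus> p \<otimes> r)"
proof -
  have a: "p\<otimes>(q\<otimes>p) = p \<otimes> q" using c i m by (metis m_assoc)
  have b: "q\<otimes>(p\<otimes>r) = p\<otimes>(q\<otimes>r)" using c m by (metis m_assoc)
  have d: "p\<otimes>(q\<otimes>(p\<otimes>r)) = p\<otimes>(q\<otimes>r)" using a c by (metis m_assoc m_closed)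
  have f: "p\<otimes>(p\<otimes>r) = p \<otimes> r" using c i by (metis m_assoc)
  have g: "q \<otimes> p = p \<otimes> q" using m by simp
  have h: "\<And>x. x \<in> carrier R \<Longrightarrow> p\<otimes>(p\<otimes>x) = p \<otimes> x" using c i by (metis m_assoc)
  show ?thesis using c apply (simp add: csimps a b d f g i h) by algebra
qed

lemma cp_join_comm:
  assumes c: "p \<in> carrier R" "q \<in> carrier R" and m: "p \<otimes> q = q \<otimes> p"
  shows "p \<oplus> q \<ominus> p \<otimes> q = q \<oplus> p \<ominus> q \<otimes> p"
  using c unfolding m by algebra

lemma cp_compl:
  assumes c: "p \<in> carrier R" and i: "p \<otimes> p = p"
  shows "p \<otimes> (\<one> \<ominus> p) = \<zero>" "p \<oplus> (\<one> \<ominus> p) \<ominus> p \<otimes> (\<one> \<ominus> p) = \<one>"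
proof -
  show 1: "p \<otimes> (\<one> \<ominus> p) = \<zero>" using c i by (simp add: csimps)
  show "p \<oplus> (\<one> \<ominus> p) \<ominus> p \<otimes> (\<one> \<ominus> p) = \<one>" unfolding 1 using c apply (simp add: csimps) by algebra
qed

lemma cp_unit:
  assumes c: "p \<in> carrier R"
  shows "p \<otimes> \<one> = p" "p \<oplus> \<zero> \<ominus> p \<otimes> \<zero> = p"
  using c by (simp_all add: csimps)

lemma cp_below_join:
  assumes c: "a \<in> carrier R" "p \<in> carrier R" "q \<in> carrier R" and h: "a \<otimes> p = a"
  shows "a \<otimes> (p \<oplus> q \<ominus> p \<otimes> q) = a"
proof -
  have "a \<otimes> (p \<otimes> q) = a \<otimes> q" using c h by (metis m_assoc)
  then show ?thesis using c h apply (simp add: csimps) by algebra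
qed

lemma cp_join_below:
  assumes c: "a \<in> carrier R" "b \<in> carrier R" "p \<in> carrier R" and h: "a \<otimes> p = a" "b \<otimes> p = b"
  shows "(a \<oplus> b \<ominus> a \<otimes> b) \<otimes> p = a \<oplus> b \<ominus> a \<otimes> b"
proof -
  have "a \<otimes> (b \<otimes> p) = a \<otimes> b" using c h by simp
  then show ?thesis using c h apply (simp add: csimps) by algebra
qed

lemma cp_comm_close:
  assumes c: "x \<in> carrier R" "p \<in> carrier R" "q \<in> carrier R"
    and m: "x \<otimes> p = p \<otimes> x" "x \<otimes> q = q \<otimes> x"
  shows "x \<otimes> (p \<otimes> q) = (p \<otimes> q) \<otimes> x"
    "x \<otimes> (p \<oplus> q \<ominus> p \<otimes> q) = (p \<oplus> q \<ominus> p \<otimes> q) \<otimes> x"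
    "x \<otimes> (\<one> \<ominus> p) = (\<one> \<ominus> p) \<otimes> x"
proof -
  have xpq: "x \<otimes> (p \<otimes> q) = (p \<otimes> q) \<otimes> x"
    using c m by (metis m_assoc)
  then show "x \<otimes> (p \<otimes> q) = (p \<otimes> q) \<otimes> x" .
  have xpq': "x \<otimes> (p \<otimes> q) = p \<otimes> (q \<otimes> x)" using xpq c by (simp add: m_assoc)
  show "x \<otimes> (p \<oplus> q \<ominus> p \<otimes> q) = (p \<oplus> q \<ominus> p \<otimes> q) \<otimes> x"
    using c m xpq' by (simp add: csimps)
  show "x \<otimes> (\<one> \<ominus> p) = (\<one> \<ominus> p) \<otimes> x" using c m by (simp add: csimps)
qed

lemma cp_meet_le:
  assumes c: "a \<in> carrier R" "p \<in> carrier R" "q \<in> carrier R" and i: "p \<otimes> p = p"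
    and m: "p \<otimes> q = q \<otimes> p" and h: "a \<otimes> (p \<otimes> q) = a"
  shows "a \<otimes> p = a"
proof -
  have "a \<otimes> p = a \<otimes> (p \<otimes> q) \<otimes> p" using h by simp
  also have "\<dots> = a \<otimes> (p \<otimes> (q \<otimes> p))" using c by (simp add: m_assoc)
  also have "\<dots> = a \<otimes> (p \<otimes> p \<otimes> q)" using c m by (simp add: m_assoc)
  also have "\<dots> = a" using i h by simp
  finally show ?thesis .
qed
end

section \<open>Matrix ring\<close>

abbreviation RM :: "nat \<Rightarrow> (complex mat, unit) ring_scheme" where
  "RM n \<equiv> ring_mat TYPE(complex) n ()"

lemma RM_ring: "ring (RM n)" by (rule ring_mat)

lemma RM_minus: assumes "A \<in> carrier_mat n n" "B \<in> carrier_mat n n"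
  shows "a_minus (RM n) A B = A - B"
proof -
  interpret R: ring "RM n" by (rule RM_ring)
  have "\<ominus>\<^bsub>RM n\<^esub> B = - B"
    by (rule R.minus_equality) (use assms in \<open>auto simp: ring_mat_simps\<close>)
  then show ?thesis using assms unfolding a_minus_def by (simp add: ring_mat_simps minus_add_uminus_mat)
qed

lemma sq_mult_carrier: "A \<in> carrier_mat n n \<Longrightarrow> B \<in> carrier_mat n n \<Longrightarrow> A * B \<in> carrier_mat n n"
  by auto

lemmas RMs = ring_mat_simps RM_minus add_carrier_mat sq_mult_carrier minus_carrier_mat zero_carrier_mat one_carrier_mat

lemma m_dist2:
  fixes p q r :: "complex mat"
  assumes c: "p \<in> carrier_mat n n" "q \<in> carrier_mat n n" "r \<in> carrier_mat n n"
  and i: "p * p = p"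
  and m: "p * q = q * p" "p * r = r * p"
  shows "p + q * r - p * (q * r) = (p + q - p * q) * (p + r - p * r)"
  using ring.cp_dist2[OF RM_ring, of p n q r] assms by (simp add: RMs)

lemma m_dist1:
  fixes p q r :: "complex mat"
  assumes c: "p \<in> carrier_mat n n" "q \<in> carrier_mat n n" "r \<in> carrier_mat n n"
  and i: "p * p = p"
  and m: "p * q = q * p"
  shows "p * (q + r - q * r) = p * q + p * r - (p * q) * (p * r)"
  using ring.cp_dist1[OF RM_ring, of p n q r] assms by (simp add: RMs)

lemma m_meet_idem:
  fixes p q :: "complex mat"
  assumes "p \<in> carrier_mat n n" "q \<in> carrier_mat n n" "p * p = p" "q * q = q" "p * q = q * p"
  shows "(p * q) * (p * q) = p * q"
  using ring.cp_meet_idem[OF RM_ring, of p n q] assms by (simp add: RMs)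

lemma m_join_idem:
  fixes p q :: "complex mat"
  assumes "p \<in> carrier_mat n n" "q \<in> carrier_mat n n" "p * p = p" "q * q = q" "p * q = q * p"
  shows "(p + q - p * q) * (p + q - p * q) = p + q - p * q"
  using ring.cp_join_idem[OF RM_ring, of p n q] assms by (simp add: RMs)

lemma m_neg_idem:
  fixes p :: "complex mat"
  assumes "p \<in> carrier_mat n n" "p * p = p"
  shows "(1\<^sub>m n - p) * (1\<^sub>m n - p) = 1\<^sub>m n - p"
  using ring.cp_neg_idem[OF RM_ring, of p n] assms by (simp add: RMs)

lemma m_join_comm:
  fixes p q :: "complex mat"
  assumes "p \<in> carrier_mat n n" "q \<in> carrier_mat n n" "p * q = q * p"
  shows "p + q - p * q = q + p - q * p"
  using ring.cp_join_comm[OF RM_ring, of p n q] assms by (simp add: RMs)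

lemma m_compl:
  fixes p :: "complex mat"
  assumes "p \<in> carrier_mat n n" "p * p = p"
  shows "p * (1\<^sub>m n - p) = 0\<^sub>m n n" "p + (1\<^sub>m n - p) - p * (1\<^sub>m n - p) = 1\<^sub>m n"
  using ring.cp_compl[OF RM_ring, of p n] assms by (simp_all add: RMs)

lemma m_unit:
  fixes p :: "complex mat"
  assumes "p \<in> carrier_mat n n"
  shows "p * 1\<^sub>m n = p" "p + 0\<^sub>m n n - p * 0\<^sub>m n n = p"
  using ring.cp_unit[OF RM_ring, of p n] assms by (simp_all add: RMs)

lemma m_below_join:
  fixes a p q :: "complex mat"
  assumes "a \<in> carrier_mat n n" "p \<in> carrier_mat n n" "q \<in> carrier_mat n n" "a * p = a"
  shows "a * (p + q - p * q) = a"
  using ring.cp_below_join[OF RM_ring, of a n p q] assms by (simp add: RMs)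

lemma m_join_below:
  fixes a b p :: "complex mat"
  assumes "a \<in> carrier_mat n n" "b \<in> carrier_mat n n" "p \<in> carrier_mat n n" "a * p = a" "b * p = b"
  shows "(a + b - a * b) * p = a + b - a * b"
  using ring.cp_join_below[OF RM_ring, of a n b p] assms by (simp add: RMs)

lemma m_comm_close:
  fixes x p q :: "complex mat"
  assumes "x \<in> carrier_mat n n" "p \<in> carrier_mat n n" "q \<in> carrier_mat n n"
    "x * p = p * x" "x * q = q * x"
  shows "x * (p * q) = (p * q) * x"
    "x * (p + q - p * q) = (p + q - p * q) * x"
    "x * (1\<^sub>m n - p) = (1\<^sub>m n - p) * x"
  using ring.cp_comm_close[OF RM_ring, of x n p q] assms by (simp_all add: RMs)

lemma m_meet_le:
  fixes a p q :: "complex mat"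
  assumes "a \<in> carrier_mat n n" "p \<in> carrier_mat n n" "q \<in> carrier_mat n n" "p * p = p"
    "p * q = q * p" "a * (p * q) = a"
  shows "a * p = a"
  using ring.cp_meet_le[OF RM_ring, of a n p q] assms by (simp add: RMs)

definition herm :: "nat \<Rightarrow> complex mat \<Rightarrow> bool" where
  "herm n p \<longleftrightarrow> (\<forall>i<n. \<forall>j<n. p $$ (i, j) = cnj (p $$ (j, i)))"

abbreviation PC :: "nat \<Rightarrow> complex mat set" where "PC n \<equiv> pcarrier (Proj n)"

lemma PC_iff: "p \<in> PC n \<longleftrightarrow> p \<in> carrier_mat n n \<and> herm n p \<and> p * p = p"
  by (simp add: Proj_def herm_def)

lemma mult_entry:
  fixes A B :: "complex mat"
  assumes "A \<in> carrier_mat n n" "B \<in> carrier_mat n n" "i < n" "j < n"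
  shows "(A * B) $$ (i, j) = (\<Sum>k<n. A $$ (i, k) * B $$ (k, j))"
  using assms by (simp add: scalar_prod_def atLeast0LessThan)

lemma herm_mult:
  fixes p q :: "complex mat"
  assumes c: "p \<in> carrier_mat n n" "q \<in> carrier_mat n n" and h: "herm n p" "herm n q"
    and m: "p * q = q * p"
  shows "herm n (p * q)"
  unfolding herm_def
proof (intro allI impI)
  fix i j assume ij: "i < n" "j < n"
  have "cnj ((p * q) $$ (j, i)) = cnj ((q * p) $$ (j, i))" using m by simp
  also have "\<dots> = cnj (\<Sum>k<n. q $$ (j, k) * p $$ (k, i))"
    by (subst mult_entry[OF c(2,1) ij(2,1)]) simp
  also have "\<dots> = (\<Sum>k<n. cnj (q $$ (j, k)) * cnj (p $$ (k, i)))"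
    by (simp add: cnj_sum)
  also have "\<dots> = (\<Sum>k<n. p $$ (i, k) * q $$ (k, j))"
  proof (rule sum.cong[OF refl])
    fix k assume "k \<in> {..<n}"
    then have k: "k < n" by simp
    have "q $$ (k,j) = cnj (q $$ (j,k))" "p $$ (i,k) = cnj (p $$ (k,i))" using h k ij unfolding herm_def by blast+
    then show "cnj (q $$ (j,k)) * cnj (p $$ (k,i)) = p $$ (i,k) * q $$ (k,j)" by (simp add: mult.commute)
  qed
  also have "\<dots> = (p * q) $$ (i, j)" by (subst mult_entry[OF c ij]) simp
  finally show "(p * q) $$ (i, j) = cnj ((p * q) $$ (j, i))" by simp
qed

lemma herm_add: assumes "p \<in> carrier_mat n n" "q \<in> carrier_mat n n" "herm n p" "herm n q" shows "herm n (p + q)"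
  unfolding herm_def
proof (intro allI impI)
  fix i j assume ij: "i < n" "j < n"
  have "p $$ (i,j) = cnj (p $$ (j,i))" "q $$ (i,j) = cnj (q $$ (j,i))" using assms ij unfolding herm_def by blast+
  then show "(p + q) $$ (i, j) = cnj ((p + q) $$ (j, i))" using assms ij by simp
qed
lemma herm_minus: assumes "p \<in> carrier_mat n n" "q \<in> carrier_mat n n" "herm n p" "herm n q" shows "herm n (p - q)"
  unfolding herm_def
proof (intro allI impI)
  fix i j assume ij: "i < n" "j < n"
  have "p $$ (i,j) = cnj (p $$ (j,i))" "q $$ (i,j) = cnj (q $$ (j,i))" using assms ij unfolding herm_def by blast+
  then show "(p - q) $$ (i, j) = cnj ((p - q) $$ (j, i))" using assms ij by simp
qed
lemma herm_one: "herm n (1\<^sub>m n)" unfolding herm_def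
proof (intro allI impI)
  fix i j assume "i < n" "j < n"
  then show "1\<^sub>m n $$ (i, j) = cnj (1\<^sub>m n $$ (j, i))" by (cases "i = j") auto
qed
lemma herm_zero: "herm n (0\<^sub>m n n)" unfolding herm_def by (intro allI impI) simp

lemma PC_zero: "0\<^sub>m n n \<in> PC n" by (simp add: PC_iff herm_zero)
lemma PC_one: "1\<^sub>m n \<in> PC n" by (simp add: PC_iff herm_one)

lemma PC_meet: assumes "p \<in> PC n" "q \<in> PC n" "p * q = q * p" shows "p * q \<in> PC n"
  using assms by (auto simp: PC_iff intro: herm_mult m_meet_idem)

lemma PC_join: assumes "p \<in> PC n" "q \<in> PC n" "p * q = q * p" shows "p + q - p * q \<in> PC n"
proof -
  have a: "p \<in> carrier_mat n n" "herm n p" "p * p = p" "q \<in> carrier_mat n n" "herm n q" "q * q = q"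
    using assms by (auto simp: PC_iff)
  have "herm n (p + q - p * q)"
    by (rule herm_minus) (use a herm_add herm_mult[OF a(1,4,2,5) assms(3)] in auto)
  moreover have "(p + q - p * q) * (p + q - p * q) = p + q - p * q"
    by (rule m_join_idem[OF a(1,4,3,6) assms(3)])
  moreover have "p + q - p * q \<in> carrier_mat n n"
    using a by (intro minus_carrier_mat add_carrier_mat sq_mult_carrier)
  ultimately show ?thesis by (simp only: PC_iff)
qed

lemma PC_neg: assumes "p \<in> PC n" shows "1\<^sub>m n - p \<in> PC n"
  using assms by (auto simp: PC_iff intro!: herm_minus herm_one m_neg_idem)

definition cmt :: "nat \<Rightarrow> complex mat set \<Rightarrow> complex mat set" where
  "cmt n X = {q \<in> carrier_mat n n. \<forall>s\<in>X. q * s = s * q}"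

definition dc :: "nat \<Rightarrow> complex mat set \<Rightarrow> complex mat set" where
  "dc n X = {p \<in> PC n. \<forall>q\<in>cmt n X. p * q = q * p}"

definition commuting :: "nat \<Rightarrow> complex mat set \<Rightarrow> bool" where
  "commuting n X \<longleftrightarrow> X \<subseteq> PC n \<and> (\<forall>x\<in>X. \<forall>y\<in>X. x * y = y * x)"

lemma dc_PC: "dc n X \<subseteq> PC n" by (auto simp: dc_def)

lemma dc_sub: "commuting n X \<Longrightarrow> X \<subseteq> dc n X"
  by (auto simp: dc_def cmt_def commuting_def)

lemma dc_in_cmt: assumes "commuting n X" "p \<in> dc n X" shows "p \<in> cmt n X"
  using assms by (auto simp: dc_def cmt_def commuting_def PC_iff)

lemma dc_comm: assumes "commuting n X" "p \<in> dc n X" "q \<in> dc n X" shows "p * q = q * p"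
  using dc_in_cmt[OF assms(1,3)] assms(2) by (auto simp: dc_def)

lemma dc_commuting: "commuting n X \<Longrightarrow> commuting n (dc n X)"
  using dc_comm dc_PC unfolding commuting_def by blast

lemma dc_zero: "0\<^sub>m n n \<in> dc n X"
  by (auto simp: dc_def cmt_def PC_zero)
lemma dc_one: "1\<^sub>m n \<in> dc n X"
  by (auto simp: dc_def cmt_def PC_one)

lemma dc_meet: assumes "commuting n X" "p \<in> dc n X" "q \<in> dc n X" shows "p * q \<in> dc n X"
proof -
  have pq: "p * q = q * p" by (rule dc_comm[OF assms])
  have P: "p \<in> PC n" "q \<in> PC n" using assms dc_PC by auto
  show ?thesis unfolding dc_def
  proof (intro CollectI conjI ballI)
    show "p * q \<in> PC n" by (rule PC_meet[OF P pq])
    fix x assume x: "x \<in> cmt n X"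
    have "x * (p * q) = (p * q) * x"
      by (rule m_comm_close(1)[of x n]) (use x assms P in \<open>auto simp: cmt_def dc_def PC_iff\<close>)
    then show "p * q * x = x * (p * q)" by simp
  qed
qed

lemma dc_join: assumes "commuting n X" "p \<in> dc n X" "q \<in> dc n X" shows "p + q - p * q \<in> dc n X"
proof -
  have pq: "p * q = q * p" by (rule dc_comm[OF assms])
  have P: "p \<in> PC n" "q \<in> PC n" using assms dc_PC by auto
  show ?thesis unfolding dc_def
  proof (intro CollectI conjI ballI)
    show "p + q - p * q \<in> PC n" by (rule PC_join[OF P pq])
    fix x assume x: "x \<in> cmt n X"
    have "x * (p + q - p * q) = (p + q - p * q) * x"
      by (rule m_comm_close(2)[of x n]) (use x assms P in \<open>auto simp: cmt_def dc_def PC_iff\<close>)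
    then show "(p + q - p * q) * x = x * (p + q - p * q)" by simp
  qed
qed

lemma dc_neg: assumes "p \<in> dc n X" shows "1\<^sub>m n - p \<in> dc n X"
proof -
  have P: "p \<in> PC n" using assms dc_PC by auto
  show ?thesis unfolding dc_def
  proof (intro CollectI conjI ballI)
    show "1\<^sub>m n - p \<in> PC n" by (rule PC_neg[OF P])
    fix x assume x: "x \<in> cmt n X"
    have "x * (1\<^sub>m n - p) = (1\<^sub>m n - p) * x"
      by (rule m_comm_close(3)[of x n p p]) (use x assms P in \<open>auto simp: cmt_def dc_def PC_iff\<close>)
    then show "(1\<^sub>m n - p) * x = x * (1\<^sub>m n - p)" by simp
  qed
qed

definition Sub :: "nat \<Rightarrow> complex mat set \<Rightarrow> complex mat pba" where
  "Sub n T = (Proj n)\<lparr>pcarrier := T\<rparr>"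

lemma Sub_simps[simp]:
  "pcarrier (Sub n T) = T"
  "pcomm (Sub n T) = (\<lambda>p q. p * q = q * p)"
  "pzero (Sub n T) = 0\<^sub>m n n"
  "pone (Sub n T) = 1\<^sub>m n"
  "pneg (Sub n T) = (\<lambda>p. 1\<^sub>m n - p)"
  "pmeet (Sub n T) = (\<lambda>p q. p * q)"
  "pjoin (Sub n T) = (\<lambda>p q. p + q - p * q)"
  by (simp_all add: Sub_def Proj_def)

lemma Sub_PC: "Sub n (PC n) = Proj n"
  by (simp add: Sub_def)

lemma BA_dc:
  assumes X: "commuting n X" and T: "dc n X \<subseteq> T"
  shows "is_BA_on (Sub n T) (dc n X)"
proof -
  have car: "\<And>p. p \<in> dc n X \<Longrightarrow> p \<in> carrier_mat n n" and id: "\<And>p. p \<in> dc n X \<Longrightarrow> p * p = p"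
    using subsetD[OF dc_PC, of _ n X] unfolding PC_iff by blast+
  have cm: "\<And>p q. p \<in> dc n X \<Longrightarrow> q \<in> dc n X \<Longrightarrow> p * q = q * p" using dc_comm[OF X] by blast
  show ?thesis unfolding is_BA_on_def Sub_simps
  proof (intro conjI ballI)
    show "dc n X \<subseteq> T" by (rule T)
    show "0\<^sub>m n n \<in> dc n X" "1\<^sub>m n \<in> dc n X" by (rule dc_zero, rule dc_one)
    fix x assume x: "x \<in> dc n X"
    show "1\<^sub>m n - x \<in> dc n X" by (rule dc_neg[OF x])
    show "x * 1\<^sub>m n = x" "x + 0\<^sub>m n n - x * 0\<^sub>m n n = x" using m_unit[OF car[OF x]] by blast+
    show "x * (1\<^sub>m n - x) = 0\<^sub>m n n" "x + (1\<^sub>m n - x) - x * (1\<^sub>m n - x) = 1\<^sub>m n"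
      using m_compl[OF car[OF x] id[OF x]] by blast+
    fix y assume y: "y \<in> dc n X"
    show "x * y = y * x" by (rule cm[OF x y])
    show "x * y \<in> dc n X" by (rule dc_meet[OF X x y])
    show "x + y - x * y \<in> dc n X" by (rule dc_join[OF X x y])
    show "x * y = y * x" by (rule cm[OF x y])
    show "x + y - x * y = y + x - y * x" by (rule m_join_comm[OF car[OF x] car[OF y] cm[OF x y]])
    fix z assume z: "z \<in> dc n X"
    show "x * (y + z - y * z) = x * y + x * z - x * y * (x * z)"
      by (rule m_dist1[OF car[OF x] car[OF y] car[OF z] id[OF x] cm[OF x y]])
    show "x + y * z - x * (y * z) = (x + y - x * y) * (x + z - x * z)"
      by (rule m_dist2[OF car[OF x] car[OF y] car[OF z] id[OF x] cm[OF x y] cm[OF x z]])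
  qed
qed

lemma Sub_dc_pba:
  assumes X: "commuting n X"
  shows "is_pba (Sub n (dc n X))"
  unfolding is_pba_def Sub_simps
proof (intro conjI ballI allI impI)
  have car: "\<And>p. p \<in> dc n X \<Longrightarrow> p \<in> carrier_mat n n"
    using subsetD[OF dc_PC, of _ n X] unfolding PC_iff by blast
  show "0\<^sub>m n n \<in> dc n X" "1\<^sub>m n \<in> dc n X" by (rule dc_zero, rule dc_one)
  fix x assume x: "x \<in> dc n X"
  show "x * x = x * x" by simp
  show "0\<^sub>m n n * x = x * 0\<^sub>m n n" "1\<^sub>m n * x = x * 1\<^sub>m n" using car[OF x] by auto
  show "1\<^sub>m n - x \<in> dc n X" by (rule dc_neg[OF x])
  { fix y assume y: "y \<in> dc n X" and xy: "x * y = y * x"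
    then show "y * x = x * y" by simp
    show "x * y \<in> dc n X" by (rule dc_meet[OF X x y])
    show "x + y - x * y \<in> dc n X" by (rule dc_join[OF X x y]) }
next
  fix S assume "S \<subseteq> dc n X"
  then show "\<exists>T. S \<subseteq> T \<and> is_BA_on (Sub n (dc n X)) T"
    using BA_dc[OF X order_refl] by blast
qed

lemma Sub_dc_boolean:
  assumes X: "commuting n X"
  shows "is_boolean (Sub n (dc n X))"
  unfolding is_boolean_def using Sub_dc_pba[OF X] dc_comm[OF X] by simp

lemma Proj_pba: "is_pba (Proj n)"
proof -
  have "is_pba (Sub n (PC n))"
    unfolding is_pba_def Sub_simps
  proof (intro conjI ballI allI impI)
    show "0\<^sub>m n n \<in> PC n" "1\<^sub>m n \<in> PC n" by (rule PC_zero, rule PC_one)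
    fix x assume x: "x \<in> PC n"
    then have xc: "x \<in> carrier_mat n n" by (simp add: PC_iff)
    show "x * x = x * x" by simp
    show "0\<^sub>m n n * x = x * 0\<^sub>m n n" "1\<^sub>m n * x = x * 1\<^sub>m n" using xc by auto
    show "1\<^sub>m n - x \<in> PC n" by (rule PC_neg[OF x])
    { fix y assume y: "y \<in> PC n" and xy: "x * y = y * x"
      then show "y * x = x * y" by simp
      show "x * y \<in> PC n" by (rule PC_meet[OF x y xy])
      show "x + y - x * y \<in> PC n" by (rule PC_join[OF x y xy]) }
  next
    fix S assume S: "S \<subseteq> PC n" "\<forall>x\<in>S. \<forall>y\<in>S. x * y = y * x"
    then have X: "commuting n S" by (simp add: commuting_def)
    show "\<exists>T. S \<subseteq> T \<and> is_BA_on (Sub n (PC n)) T"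
      using dc_sub[OF X] BA_dc[OF X dc_PC] by blast
  qed
  then show ?thesis by (simp add: Sub_PC)
qed

lemma incl_hom:
  assumes X: "commuting n X" and T: "dc n X \<subseteq> T"
  shows "pba_hom (Sub n (dc n X)) (Sub n T) (restrict id (dc n X))"
  unfolding pba_hom_def Sub_simps
proof (intro conjI ballI impI)
  show "restrict id (dc n X) \<in> dc n X \<rightarrow>\<^sub>E T" using T by auto
  fix x y assume x: "x \<in> dc n X" and y: "y \<in> dc n X"
  show "restrict id (dc n X) x * restrict id (dc n X) y = restrict id (dc n X) y * restrict id (dc n X) x"
    if "x * y = y * x" using x y that by simp
  show "restrict id (dc n X) (x * y) = restrict id (dc n X) x * restrict id (dc n X) y"
    using x y dc_meet[OF X x y] by simp
  show "restrict id (dc n X) (x + y - x * y) =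
    restrict id (dc n X) x + restrict id (dc n X) y - restrict id (dc n X) x * restrict id (dc n X) y"
    using x y dc_join[OF X x y] by (simp only: restrict_apply' id_apply)
next
  show "restrict id (dc n X) (0\<^sub>m n n) = 0\<^sub>m n n" using dc_zero by simp
  show "restrict id (dc n X) (1\<^sub>m n) = 1\<^sub>m n" using dc_one by simp
  fix x assume x: "x \<in> dc n X"
  show "restrict id (dc n X) (1\<^sub>m n - x) = 1\<^sub>m n - restrict id (dc n X) x"
    using x dc_neg[OF x] by simp
qed

lemma incl_hom_Proj:
  assumes X: "commuting n X"
  shows "pba_hom (Sub n (dc n X)) (Proj n) (restrict id (dc n X))"
  using incl_hom[OF X dc_PC] by (simp add: Sub_PC)

lemma dc_mono: "X \<subseteq> Y \<Longrightarrow> dc n X \<subseteq> dc n Y"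
  by (auto simp: dc_def cmt_def)

lemma dc_single_sub: assumes "p \<in> dc n X" shows "dc n {p} \<subseteq> dc n X"
  using assms by (auto simp: dc_def cmt_def)

lemma commuting_single: "p \<in> PC n \<Longrightarrow> commuting n {p}"
  by (simp add: commuting_def)

section \<open>Generic frame lattice facts\<close>

locale frm =
  fixes L :: "'f frame"
  assumes fr: "is_frame L"
begin

abbreviation C where "C \<equiv> fcarrier L"
abbreviation le (infix "\<preceq>" 50) where "le \<equiv> fle L"

lemma F1: "\<forall>x\<in>C. x \<preceq> x" using fr unfolding is_frame_def by (elim conjE)
lemma F2: "\<forall>x\<in>C. \<forall>y\<in>C. x \<preceq> y \<longrightarrow> y \<preceq> x \<longrightarrow> x = y" using fr unfolding is_frame_def by (elim conjE)
lemma F3: "\<forall>x\<in>C. \<forall>y\<in>C. \<forall>z\<in>C. x \<preceq> y \<longrightarrow> y \<preceq> z \<longrightarrow> x \<preceq> z" using fr unfolding is_frame_def by (elim conjE)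
lemma F4: "\<forall>X. X \<subseteq> C \<longrightarrow> (\<exists>s. is_lub L X s)" using fr unfolding is_frame_def by (elim conjE)
lemma F5: "\<forall>a\<in>C. \<forall>b\<in>C. \<exists>s. is_glb L {a, b} s" using fr unfolding is_frame_def by (elim conjE)
lemma F6: "\<forall>a\<in>C. \<forall>X. X \<subseteq> C \<longrightarrow> fmeet L a (fSup L X) = fSup L ((\<lambda>x. fmeet L a x) ` X)"
  using fr unfolding is_frame_def by (elim conjE)

lemma refl: "x \<in> C \<Longrightarrow> x \<preceq> x" using F1 by blast
lemma antisym: "x \<in> C \<Longrightarrow> y \<in> C \<Longrightarrow> x \<preceq> y \<Longrightarrow> y \<preceq> x \<Longrightarrow> x = y"
  using F2 by blast
lemma trans: "x \<in> C \<Longrightarrow> y \<in> C \<Longrightarrow> z \<in> C \<Longrightarrow> x \<preceq> y \<Longrightarrow> y \<preceq> z \<Longrightarrow> x \<preceq> z"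
  using F3 by blast

lemma lub_unique: "is_lub L X s \<Longrightarrow> is_lub L X t \<Longrightarrow> s = t"
  unfolding is_lub_def using antisym by blast
lemma glb_unique: "is_glb L X s \<Longrightarrow> is_glb L X t \<Longrightarrow> s = t"
  unfolding is_glb_def using antisym by blast

lemma fSup_lub: assumes "X \<subseteq> C" shows "is_lub L X (fSup L X)"
proof -
  obtain s where s: "is_lub L X s" using F4 assms by blast
  show ?thesis unfolding fSup_def by (rule theI[of _ s]) (use s lub_unique in blast)+
qed

lemma fSup_eq: "is_lub L X s \<Longrightarrow> fSup L X = s"
  unfolding fSup_def by (rule the_equality) (use lub_unique in blast)+

lemma fmeet_glb: assumes "a \<in> C" "b \<in> C" shows "is_glb L {a, b} (fmeet L a b)"
proof -
  obtain s where s: "is_glb L {a, b} s" using F5 assms by blast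
  show ?thesis unfolding fmeet_def by (rule theI[of _ s]) (use s glb_unique in blast)+
qed

lemma fmeet_eq: "is_glb L {a, b} s \<Longrightarrow> fmeet L a b = s"
  unfolding fmeet_def by (rule the_equality) (use glb_unique in blast)+

lemma meet_C: "a \<in> C \<Longrightarrow> b \<in> C \<Longrightarrow> fmeet L a b \<in> C"
  using fmeet_glb unfolding is_glb_def by blast
lemma meet_le1: "a \<in> C \<Longrightarrow> b \<in> C \<Longrightarrow> fmeet L a b \<preceq> a"
  using fmeet_glb unfolding is_glb_def by blast
lemma meet_le2: "a \<in> C \<Longrightarrow> b \<in> C \<Longrightarrow> fmeet L a b \<preceq> b"
  using fmeet_glb unfolding is_glb_def by blast
lemma meet_greatest: "a \<in> C \<Longrightarrow> b \<in> C \<Longrightarrow> u \<in> C \<Longrightarrow> u \<preceq> a \<Longrightarrow> u \<preceq> b \<Longrightarrow> u \<preceq> fmeet L a b"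
  using fmeet_glb[of a b] unfolding is_glb_def by blast

lemma sup_C: "X \<subseteq> C \<Longrightarrow> fSup L X \<in> C"
  using fSup_lub unfolding is_lub_def by blast
lemma sup_upper: "X \<subseteq> C \<Longrightarrow> x \<in> X \<Longrightarrow> x \<preceq> fSup L X"
  using fSup_lub unfolding is_lub_def by blast
lemma sup_least: "X \<subseteq> C \<Longrightarrow> u \<in> C \<Longrightarrow> (\<And>x. x \<in> X \<Longrightarrow> x \<preceq> u) \<Longrightarrow> fSup L X \<preceq> u"
  using fSup_lub[of X] unfolding is_lub_def by blast

lemma bot_C: "fbot L \<in> C" unfolding fbot_def by (rule sup_C) simp
lemma top_C: "ftop L \<in> C" unfolding ftop_def by (rule sup_C) simp
lemma bot_le: "x \<in> C \<Longrightarrow> fbot L \<preceq> x" unfolding fbot_def by (rule sup_least) auto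
lemma le_top: "x \<in> C \<Longrightarrow> x \<preceq> ftop L" unfolding ftop_def by (rule sup_upper) auto

lemma join_C: "a \<in> C \<Longrightarrow> b \<in> C \<Longrightarrow> fSup L {a, b} \<in> C" by (rule sup_C) auto
lemma join_le: "a \<in> C \<Longrightarrow> b \<in> C \<Longrightarrow> a \<preceq> fSup L {a, b}" "a \<in> C \<Longrightarrow> b \<in> C \<Longrightarrow> b \<preceq> fSup L {a, b}"
  by (rule sup_upper; auto)+
lemma join_least: "a \<in> C \<Longrightarrow> b \<in> C \<Longrightarrow> u \<in> C \<Longrightarrow> a \<preceq> u \<Longrightarrow> b \<preceq> u \<Longrightarrow> fSup L {a, b} \<preceq> u"
  by (rule sup_least) auto

lemma distrib: assumes "a \<in> C" "b \<in> C" "c \<in> C"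
  shows "fmeet L a (fSup L {b, c}) = fSup L {fmeet L a b, fmeet L a c}"
proof -
  have "fmeet L a (fSup L {b, c}) = fSup L ((\<lambda>x. fmeet L a x) ` {b, c})"
    using F6 assms by simp
  then show ?thesis by simp
qed

lemma meet_self: assumes "a \<in> C" "b \<in> C" "a \<preceq> b" shows "fmeet L a b = a"
  by (rule antisym) (use assms meet_C meet_le1 meet_greatest refl in auto)

lemma le_bot_meet: assumes "m \<in> C" "a \<in> C" "b \<in> C" "m \<preceq> a" "m \<preceq> b" "fmeet L a b \<preceq> fbot L"
  shows "m \<preceq> fbot L"
  by (rule trans[OF _ meet_C _ meet_greatest]) (use assms bot_C in auto)

lemma split: assumes a: "a \<in> C" and xy: "x \<in> C" "y \<in> C" "fSup L {x, y} = ftop L"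
  and h: "fmeet L a x \<preceq> fbot L" "fmeet L a y \<preceq> fbot L"
  shows "a \<preceq> fbot L"
proof -
  have "a = fmeet L a (ftop L)" using meet_self[OF a top_C le_top[OF a]] by simp
  also have "\<dots> = fSup L {fmeet L a x, fmeet L a y}" using distrib[OF a xy(1,2)] xy(3) by simp
  finally have e: "a = fSup L {fmeet L a x, fmeet L a y}" .
  show ?thesis by (subst e, rule join_least) (use a xy h meet_C bot_C in auto)
qed

lemma triple_leaf:
  assumes c: "m \<in> C" "xa \<in> C" "xb \<in> C" "xc \<in> C" "ya \<in> C" "yb \<in> C" "yc \<in> C"
    and e: "m \<preceq> fSup L {fSup L {xa, xb}, xc}"
    and y: "m \<preceq> ya" "m \<preceq> yb" "m \<preceq> yc"
    and o: "fmeet L xa ya \<preceq> fbot L" "fmeet L xb yb \<preceq> fbot L" "fmeet L xc yc \<preceq> fbot L"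
  shows "m \<preceq> fbot L"
proof -
  have j: "fSup L {xa, xb} \<in> C" using c join_C by auto
  have mC: "fmeet L m xa \<in> C" "fmeet L m xb \<in> C" "fmeet L m xc \<in> C" using c meet_C by auto
  have m1: "fmeet L m xa \<preceq> fbot L"
    by (rule le_bot_meet[OF mC(1) c(2,5) meet_le2[OF c(1,2)] trans[OF mC(1) c(1) c(5) meet_le1[OF c(1,2)] y(1)] o(1)])
  have m2: "fmeet L m xb \<preceq> fbot L"
    by (rule le_bot_meet[OF mC(2) c(3,6) meet_le2[OF c(1,3)] trans[OF mC(2) c(1) c(6) meet_le1[OF c(1,3)] y(2)] o(2)])
  have m3: "fmeet L m xc \<preceq> fbot L"
    by (rule le_bot_meet[OF mC(3) c(4,7) meet_le2[OF c(1,4)] trans[OF mC(3) c(1) c(7) meet_le1[OF c(1,4)] y(3)] o(3)])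
  have "m = fmeet L m (fSup L {fSup L {xa, xb}, xc})" using meet_self[OF c(1) join_C[OF j c(4)] e] by simp
  also have "\<dots> = fSup L {fSup L {fmeet L m xa, fmeet L m xb}, fmeet L m xc}"
    using distrib[OF c(1) j c(4)] distrib[OF c(1) c(2) c(3)] by simp
  finally have eq: "m = fSup L {fSup L {fmeet L m xa, fmeet L m xb}, fmeet L m xc}" .
  have b1: "fSup L {fmeet L m xa, fmeet L m xb} \<preceq> fbot L"
    by (rule join_least[OF mC(1,2) bot_C m1 m2])
  show ?thesis
    by (subst eq, rule join_least[OF join_C[OF mC(1,2)] mC(3) bot_C b1 m3])
qed

lemma pair_leaf:
  assumes c: "m \<in> C" "xa \<in> C" "xb \<in> C" and h: "m \<preceq> xa" "m \<preceq> xb" and o: "fmeet L xa xb = fbot L"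
  shows "m \<preceq> fbot L"
  by (rule le_bot_meet[OF c h]) (use o refl bot_C in simp)

definition lt :: "(nat \<Rightarrow> 'f) \<Rightarrow> (nat \<Rightarrow> 'f) \<Rightarrow> (nat \<Rightarrow> bool) \<Rightarrow> nat \<Rightarrow> 'f" where
  "lt x y v i = (if v i then x i else y i)"

fun Mf :: "(nat \<Rightarrow> 'f) \<Rightarrow> (nat \<Rightarrow> 'f) \<Rightarrow> 'f \<Rightarrow> (nat \<Rightarrow> bool) \<Rightarrow> nat \<Rightarrow> 'f" where
  "Mf x y a v 0 = a"
| "Mf x y a v (Suc k) = Mf x y (fmeet L a (lt x y v k)) v k"

context
  fixes x y :: "nat \<Rightarrow> 'f"
  assumes xyC: "\<And>i. x i \<in> C" "\<And>i. y i \<in> C"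
begin

lemma lit_C: "lt x y v i \<in> C" using xyC by (auto simp: lt_def)

lemma Mf_C: "a \<in> C \<Longrightarrow> Mf x y a v k \<in> C"
  by (induction k arbitrary: a) (auto simp: meet_C lit_C)

lemma Mf_cong: "(\<And>i. i < k \<Longrightarrow> v i = w i) \<Longrightarrow> Mf x y a v k = Mf x y a w k"
  by (induction k arbitrary: a) (auto simp: lt_def)

lemma Mf_le_a: "a \<in> C \<Longrightarrow> Mf x y a v k \<preceq> a"
proof (induction k arbitrary: a)
  case 0 then show ?case by (simp add: refl)
next
  case (Suc k)
  have m: "fmeet L a (lt x y v k) \<in> C" using Suc lit_C meet_C by blast
  show ?case using trans[OF Mf_C[OF m] m Suc.prems Suc.IH[OF m] meet_le1[OF Suc.prems lit_C]] by simp
qed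

lemma Mf_le_lit: "a \<in> C \<Longrightarrow> i < k \<Longrightarrow> Mf x y a v k \<preceq> lt x y v i"
proof (induction k arbitrary: a)
  case 0 then show ?case by simp
next
  case (Suc k)
  have m: "fmeet L a (lt x y v k) \<in> C" using Suc lit_C meet_C by blast
  show ?case
  proof (cases "i = k")
    case True
    have "Mf x y a v (Suc k) \<preceq> fmeet L a (lt x y v k)" using Mf_le_a[OF m] by simp
    moreover have "fmeet L a (lt x y v k) \<preceq> lt x y v k"
      by (rule meet_le2[OF Suc.prems(1) lit_C])
    ultimately show ?thesis using True trans[OF Mf_C[OF m] m lit_C] by simp
  next
    case False
    then have "i < k" using Suc by simp
    then show ?thesis using Suc.IH[OF m] by simp
  qed
qed

lemma expand:
  assumes top: "\<And>i. fSup L {x i, y i} = ftop L"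
  shows "a \<in> C \<Longrightarrow> (\<And>v. Mf x y a v k \<preceq> fbot L) \<Longrightarrow> a \<preceq> fbot L"
proof (induction k arbitrary: a)
  case 0 then show ?case by simp
next
  case (Suc k)
  have X: "fmeet L a (x k) \<preceq> fbot L"
  proof (rule Suc.IH)
    show "fmeet L a (x k) \<in> C" using Suc.prems xyC meet_C by blast
    fix v
    have "Mf x y (fmeet L a (x k)) v k = Mf x y (fmeet L a (x k)) (v(k := True)) k"
      by (rule Mf_cong) simp
    also have "\<dots> = Mf x y a (v(k := True)) (Suc k)" by (simp add: lt_def)
    finally have eq: "Mf x y (fmeet L a (x k)) v k = Mf x y a (v(k := True)) (Suc k)" .
    show "Mf x y (fmeet L a (x k)) v k \<preceq> fbot L" unfolding eq by (rule Suc.prems(2))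
  qed
  have Y: "fmeet L a (y k) \<preceq> fbot L"
  proof (rule Suc.IH)
    show "fmeet L a (y k) \<in> C" using Suc.prems xyC meet_C by blast
    fix v
    have "Mf x y (fmeet L a (y k)) v k = Mf x y (fmeet L a (y k)) (v(k := False)) k"
      by (rule Mf_cong) simp
    also have "\<dots> = Mf x y a (v(k := False)) (Suc k)" by (simp add: lt_def)
    finally have eq: "Mf x y (fmeet L a (y k)) v k = Mf x y a (v(k := False)) (Suc k)" .
    show "Mf x y (fmeet L a (y k)) v k \<preceq> fbot L" unfolding eq by (rule Suc.prems(2))
  qed
  show ?case by (rule split[OF Suc.prems(1) xyC top X Y])
qed

end
end

section \<open>Ideal frames of the subalgebras dc X\<close>

definition down :: "complex mat set \<Rightarrow> complex mat \<Rightarrow> complex mat set" where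
  "down T p = {q \<in> T. q * p = q}"

lemma Idl_simps[simp]: "fcarrier (Idl B) = ideals B" "fle (Idl B) = (\<subseteq>)"
  by (simp_all add: Idl_def)

lemma Idl_fSup_eq: "is_lub (Idl B) X s \<Longrightarrow> fSup (Idl B) X = s"
  unfolding fSup_def by (rule the_equality) (auto simp: is_lub_def intro: subset_antisym)

lemma Idl_fmeet_eq: "is_glb (Idl B) {a, b} s \<Longrightarrow> fmeet (Idl B) a b = s"
  unfolding fmeet_def by (rule the_equality) (auto simp: is_glb_def intro: subset_antisym)

lemma ideals_Sub: "I \<in> ideals (Sub n T) \<longleftrightarrow> I \<subseteq> T \<and> 0\<^sub>m n n \<in> I \<and>
     (\<forall>a\<in>I. \<forall>b\<in>T. b * a = b \<longrightarrow> b \<in> I) \<and> (\<forall>a\<in>I. \<forall>b\<in>I. a + b - a * b \<in> I)"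
  by (simp add: ideals_def)

context
  fixes n X assumes X: "commuting n X"
begin

abbreviation "Tx \<equiv> dc n X"
abbreviation "Bx \<equiv> Sub n (dc n X)"

lemma Tc: "p \<in> Tx \<Longrightarrow> p \<in> carrier_mat n n" and Ti: "p \<in> Tx \<Longrightarrow> p * p = p"
  using subsetD[OF dc_PC, of p n X] unfolding PC_iff by blast+

lemma down_ideal: assumes p: "p \<in> Tx" shows "down Tx p \<in> ideals Bx"
  unfolding ideals_Sub
proof (intro conjI ballI impI)
  show "down Tx p \<subseteq> Tx" by (auto simp: down_def)
  show "0\<^sub>m n n \<in> down Tx p" using dc_zero Tc[OF p] by (auto simp: down_def)
  fix a b assume a: "a \<in> down Tx p"
  have a1: "a \<in> Tx" "a * p = a" using a by (auto simp: down_def)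
  { assume b: "b \<in> Tx" "b * a = b"
    have "b * p = b * a * p" using b by simp
    also have "\<dots> = b * (a * p)" using assoc_mult_mat[OF Tc[OF b(1)] Tc[OF a1(1)] Tc[OF p]] .
    also have "\<dots> = b" using a b by (simp add: down_def)
    finally show "b \<in> down Tx p" using b by (simp add: down_def) }
  { assume b: "b \<in> down Tx p"
    have "(a + b - a * b) * p = a + b - a * b"
      by (rule m_join_below) (use a b Tc p in \<open>auto simp: down_def\<close>)
    moreover have "a + b - a * b \<in> Tx" using dc_join[OF X] a b by (auto simp: down_def)
    ultimately show "a + b - a * b \<in> down Tx p" by (simp add: down_def) }
qed

lemma in_down: "p \<in> Tx \<Longrightarrow> p \<in> down Tx p" using Ti by (simp add: down_def)

lemma Idl_join: assumes p: "p \<in> Tx" and q: "q \<in> Tx"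
  shows "fSup (Idl Bx) {down Tx p, down Tx q} = down Tx (p + q - p * q)"
proof (rule Idl_fSup_eq)
  have r: "p + q - p * q \<in> Tx" using dc_join[OF X p q] .
  have pq: "p * q = q * p" using dc_comm[OF X p q] .
  show "is_lub (Idl Bx) {down Tx p, down Tx q} (down Tx (p + q - p * q))"
    unfolding is_lub_def Idl_simps
  proof (intro conjI ballI impI)
    show "down Tx (p + q - p * q) \<in> ideals Bx" by (rule down_ideal[OF r])
    fix J assume "J \<in> {down Tx p, down Tx q}"
    then show "J \<subseteq> down Tx (p + q - p * q)"
    proof
      assume J: "J = down Tx p"
      show ?thesis unfolding J down_def using m_below_join[OF Tc Tc[OF p] Tc[OF q]] by auto
    next
      assume "J \<in> {down Tx q}" then have J: "J = down Tx q" by simp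
      have e: "p + q - p * q = q + p - q * p" using m_join_comm[OF Tc[OF p] Tc[OF q] pq] .
      show ?thesis unfolding J down_def e using m_below_join[OF Tc Tc[OF q] Tc[OF p]] by auto
    qed
  next
    fix J assume J: "J \<in> ideals Bx" "\<forall>x\<in>{down Tx p, down Tx q}. x \<subseteq> J"
    then have "p \<in> J" "q \<in> J" using in_down p q by auto
    then have rJ: "p + q - p * q \<in> J" using J(1) unfolding ideals_Sub by blast
    show "down Tx (p + q - p * q) \<subseteq> J"
      using J(1) rJ unfolding ideals_Sub down_def by blast
  qed
qed

lemma Idl_meet: assumes p: "p \<in> Tx" and q: "q \<in> Tx"
  shows "fmeet (Idl Bx) (down Tx p) (down Tx q) = down Tx (p * q)"
proof (rule Idl_fmeet_eq)
  have r: "p * q \<in> Tx" using dc_meet[OF X p q] .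
  have pq: "p * q = q * p" using dc_comm[OF X p q] .
  show "is_glb (Idl Bx) {down Tx p, down Tx q} (down Tx (p * q))"
    unfolding is_glb_def Idl_simps
  proof (intro conjI ballI impI)
    show "down Tx (p * q) \<in> ideals Bx" by (rule down_ideal[OF r])
    fix J assume "J \<in> {down Tx p, down Tx q}"
    then show "down Tx (p * q) \<subseteq> J"
    proof
      assume J: "J = down Tx p"
      show ?thesis unfolding J
      proof
        fix a assume "a \<in> down Tx (p * q)"
        then have a: "a \<in> Tx" "a * (p * q) = a" by (auto simp: down_def)
        have "a * p = a" by (rule m_meet_le[OF Tc[OF a(1)] Tc[OF p] Tc[OF q] Ti[OF p] pq a(2)])
        then show "a \<in> down Tx p" using a by (simp add: down_def)
      qed
    next
      assume "J \<in> {down Tx q}" then have J: "J = down Tx q" by simp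
      show ?thesis unfolding J
      proof
        fix a assume "a \<in> down Tx (p * q)"
        then have a: "a \<in> Tx" "a * (q * p) = a" using pq by (auto simp: down_def)
        have "a * q = a" by (rule m_meet_le[OF Tc[OF a(1)] Tc[OF q] Tc[OF p] Ti[OF q] pq[symmetric] a(2)])
        then show "a \<in> down Tx q" using a by (simp add: down_def)
      qed
    qed
  next
    fix J assume J: "J \<in> ideals Bx" "\<forall>x\<in>{down Tx p, down Tx q}. J \<subseteq> x"
    show "J \<subseteq> down Tx (p * q)"
    proof
      fix a assume a: "a \<in> J"
      then have a1: "a \<in> Tx" "a * p = a" "a * q = a" using J by (auto simp: down_def)
      have "a * (p * q) = a * p * q" using assoc_mult_mat[OF Tc[OF a1(1)] Tc[OF p] Tc[OF q]] by simp
      then show "a \<in> down Tx (p * q)" using a1 by (simp add: down_def)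
    qed
  qed
qed

lemma Idl_bot: "fbot (Idl Bx) = down Tx (0\<^sub>m n n)"
  unfolding fbot_def
proof (rule Idl_fSup_eq)
  show "is_lub (Idl Bx) {} (down Tx (0\<^sub>m n n))"
    unfolding is_lub_def Idl_simps
  proof (intro conjI ballI impI)
    show "down Tx (0\<^sub>m n n) \<in> ideals Bx" by (rule down_ideal[OF dc_zero])
    fix J assume J: "J \<in> ideals Bx"
    show "down Tx (0\<^sub>m n n) \<subseteq> J"
    proof
      fix a assume "a \<in> down Tx (0\<^sub>m n n)"
      then have "a \<in> Tx" "a * 0\<^sub>m n n = a" by (auto simp: down_def)
      then have "a = 0\<^sub>m n n" using right_mult_zero_mat[OF Tc[OF \<open>a \<in> Tx\<close>], of n] by simp
      then show "a \<in> J" using J unfolding ideals_Sub by blast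
    qed
  qed simp
qed

lemma Idl_top: "ftop (Idl Bx) = down Tx (1\<^sub>m n)"
  unfolding ftop_def
proof (rule Idl_fSup_eq)
  have e: "down Tx (1\<^sub>m n) = Tx" using right_mult_one_mat[OF Tc] by (auto simp: down_def)
  show "is_lub (Idl Bx) (fcarrier (Idl Bx)) (down Tx (1\<^sub>m n))"
    unfolding is_lub_def Idl_simps
  proof (intro conjI ballI impI)
    show "down Tx (1\<^sub>m n) \<in> ideals Bx" by (rule down_ideal[OF dc_one])
    fix J assume "J \<in> ideals Bx" then show "J \<subseteq> down Tx (1\<^sub>m n)" unfolding e ideals_Sub by blast
  next
    fix J assume "J \<in> ideals Bx" "\<forall>x\<in>ideals Bx. x \<subseteq> J"
    then show "down Tx (1\<^sub>m n) \<subseteq> J" using down_ideal[OF dc_one] by blast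
  qed
qed

end

locale setting =
  fixes F :: "complex mat pba \<Rightarrow> 'f frame"
    and Fm :: "complex mat pba \<Rightarrow> complex mat pba \<Rightarrow> (complex mat \<Rightarrow> complex mat) \<Rightarrow> 'f \<Rightarrow> 'f"
    and \<eta> :: "complex mat pba \<Rightarrow> 'f \<Rightarrow> complex mat set"
    and n :: nat
  assumes fnc: "is_PBool_Loc_functor F Fm"
    and iso: "nat_iso_to_Stone F Fm \<eta>"
begin

abbreviation "P \<equiv> Proj n"
abbreviation "L \<equiv> F (Proj n)"

lemma F_frame: "is_pba A \<Longrightarrow> is_frame (F A)"
  using fnc unfolding is_PBool_Loc_functor_def by blast
lemma Fm_hom: "is_pba A \<Longrightarrow> is_pba B \<Longrightarrow> pba_hom A B f \<Longrightarrow> frame_hom (F A) (F B) (Fm A B f)"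
  using fnc unfolding is_PBool_Loc_functor_def by blast
lemma Fm_comp: "is_pba A \<Longrightarrow> is_pba B \<Longrightarrow> is_pba C \<Longrightarrow> pba_hom A B f \<Longrightarrow> pba_hom B C g \<Longrightarrow>
   x \<in> fcarrier (F A) \<Longrightarrow> Fm A C (compose (pcarrier A) g f) x = Fm B C g (Fm A B f x)"
  using fnc unfolding is_PBool_Loc_functor_def by blast
lemma eta_hom: "is_boolean B \<Longrightarrow> frame_hom (F B) (Idl B) (\<eta> B)"
  using iso unfolding nat_iso_to_Stone_def by blast
lemma eta_bij: "is_boolean B \<Longrightarrow> bij_betw (\<eta> B) (fcarrier (F B)) (ideals B)"
  using iso unfolding nat_iso_to_Stone_def by blast
lemma eta_nat: "is_boolean B \<Longrightarrow> is_boolean B' \<Longrightarrow> pba_hom B B' f \<Longrightarrow> x \<in> fcarrier (F B) \<Longrightarrow>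
   \<eta> B' (Fm B B' f x) = Idl_map B B' f (\<eta> B x)"
  using iso unfolding nat_iso_to_Stone_def by blast

lemma L_frame: "is_frame L" using F_frame[OF Proj_pba] .

definition iv :: "complex mat pba \<Rightarrow> complex mat set \<Rightarrow> 'f" where
  "iv B I = inv_into (fcarrier (F B)) (\<eta> B) I"

definition h :: "complex mat set \<Rightarrow> complex mat set \<Rightarrow> 'f" where
  "h X I = Fm (Sub n (dc n X)) P (restrict id (dc n X)) (iv (Sub n (dc n X)) I)"

context fixes X assumes X: "commuting n X"
begin

abbreviation "BB \<equiv> Sub n (dc n X)"

lemma BB_bool: "is_boolean BB" by (rule Sub_dc_boolean[OF X])
lemma BB_pba: "is_pba BB" by (rule Sub_dc_pba[OF X])

lemma FB: "frm (F BB)" using F_frame[OF BB_pba] by (simp add: frm_def)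

lemma iv_C: "I \<in> ideals BB \<Longrightarrow> iv BB I \<in> fcarrier (F BB)"
  unfolding iv_def using eta_bij[OF BB_bool] by (metis bij_betw_def inv_into_into)
lemma eta_iv: "I \<in> ideals BB \<Longrightarrow> \<eta> BB (iv BB I) = I"
  unfolding iv_def using eta_bij[OF BB_bool] by (metis bij_betw_def f_inv_into_f)
lemma iv_eta: "x \<in> fcarrier (F BB) \<Longrightarrow> iv BB (\<eta> BB x) = x"
  unfolding iv_def using eta_bij[OF BB_bool] by (metis bij_betw_def inv_into_f_f)

lemma eta_C: "x \<in> fcarrier (F BB) \<Longrightarrow> \<eta> BB x \<in> ideals BB"
  using eta_bij[OF BB_bool] by (metis bij_betw_def imageI)

lemma iv_sup: assumes S: "S \<subseteq> ideals BB" shows "iv BB (fSup (Idl BB) S) = fSup (F BB) (iv BB ` S)"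
proof -
  interpret A: frm "F BB" by (rule FB)
  have Y: "iv BB ` S \<subseteq> fcarrier (F BB)" using iv_C S by blast
  have "\<eta> BB (fSup (F BB) (iv BB ` S)) = fSup (Idl BB) (\<eta> BB ` iv BB ` S)"
    using eta_hom[OF BB_bool] Y unfolding frame_hom_def by blast
  also have "\<eta> BB ` iv BB ` S = S" using eta_iv S by (force simp: image_image)
  finally have "\<eta> BB (fSup (F BB) (iv BB ` S)) = fSup (Idl BB) S" .
  then show ?thesis using iv_eta[OF A.sup_C[OF Y]] by simp
qed

lemma iv_meet: assumes I: "I \<in> ideals BB" and J: "J \<in> ideals BB"
  shows "iv BB (fmeet (Idl BB) I J) = fmeet (F BB) (iv BB I) (iv BB J)"
proof -
  interpret A: frm "F BB" by (rule FB)
  have "\<eta> BB (fmeet (F BB) (iv BB I) (iv BB J)) = fmeet (Idl BB) (\<eta> BB (iv BB I)) (\<eta> BB (iv BB J))"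
    using eta_hom[OF BB_bool] iv_C[OF I] iv_C[OF J] unfolding frame_hom_def by blast
  then have "\<eta> BB (fmeet (F BB) (iv BB I) (iv BB J)) = fmeet (Idl BB) I J" using eta_iv I J by simp
  then show ?thesis using iv_eta[OF A.meet_C[OF iv_C[OF I] iv_C[OF J]]] by simp
qed

lemma iv_top: "iv BB (ftop (Idl BB)) = ftop (F BB)"
proof -
  interpret A: frm "F BB" by (rule FB)
  have "\<eta> BB (ftop (F BB)) = ftop (Idl BB)" using eta_hom[OF BB_bool] unfolding frame_hom_def by blast
  then show ?thesis using iv_eta[OF A.top_C] by simp
qed

lemma incl_P: "pba_hom BB P (restrict id (dc n X))" by (rule incl_hom_Proj[OF X])

lemma Fm_BB: "frame_hom (F BB) L (Fm BB P (restrict id (dc n X)))"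
  by (rule Fm_hom[OF BB_pba Proj_pba incl_P])

lemma h_C: "I \<in> ideals BB \<Longrightarrow> h X I \<in> fcarrier L"
  unfolding h_def using Fm_BB iv_C unfolding frame_hom_def by blast

lemma h_sup: assumes S: "S \<subseteq> ideals BB" shows "h X (fSup (Idl BB) S) = fSup L (h X ` S)"
proof -
  have Y: "iv BB ` S \<subseteq> fcarrier (F BB)" using iv_C S by blast
  have "h X (fSup (Idl BB) S) = Fm BB P (restrict id (dc n X)) (fSup (F BB) (iv BB ` S))"
    unfolding h_def using iv_sup[OF S] by simp
  also have "\<dots> = fSup L (Fm BB P (restrict id (dc n X)) ` iv BB ` S)"
    using Fm_BB Y unfolding frame_hom_def by blast
  also have "\<dots> = fSup L (h X ` S)" unfolding h_def by (simp add: image_image)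
  finally show ?thesis .
qed

lemma h_meet: assumes I: "I \<in> ideals BB" and J: "J \<in> ideals BB"
  shows "h X (fmeet (Idl BB) I J) = fmeet L (h X I) (h X J)"
  unfolding h_def iv_meet[OF I J] using Fm_BB iv_C[OF I] iv_C[OF J] unfolding frame_hom_def by blast

lemma h_top: "h X (ftop (Idl BB)) = ftop L"
  unfolding h_def iv_top using Fm_BB unfolding frame_hom_def by blast

lemma h_join2: assumes p: "p \<in> dc n X" and q: "q \<in> dc n X"
  shows "h X (down (dc n X) (p + q - p * q)) = fSup L {h X (down (dc n X) p), h X (down (dc n X) q)}"
proof -
  have "h X (down (dc n X) (p + q - p * q)) = h X (fSup (Idl BB) {down (dc n X) p, down (dc n X) q})"
    using Idl_join[OF X p q] by simp
  also have "\<dots> = fSup L (h X ` {down (dc n X) p, down (dc n X) q})"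
    by (rule h_sup) (use down_ideal[OF X] p q in auto)
  finally show ?thesis by simp
qed

lemma h_meet2: assumes p: "p \<in> dc n X" and q: "q \<in> dc n X"
  shows "h X (down (dc n X) (p * q)) = fmeet L (h X (down (dc n X) p)) (h X (down (dc n X) q))"
  using Idl_meet[OF X p q] h_meet[OF down_ideal[OF X p] down_ideal[OF X q]] by simp

lemma h_zero: "h X (down (dc n X) (0\<^sub>m n n)) = fbot L"
proof -
  have "h X (down (dc n X) (0\<^sub>m n n)) = h X (fSup (Idl BB) {})" using Idl_bot[OF X] by (simp add: fbot_def)
  also have "\<dots> = fSup L {}" using h_sup[of "{}"] by simp
  finally show ?thesis by (simp add: fbot_def)
qed

lemma h_one: "h X (down (dc n X) (1\<^sub>m n)) = ftop L"
  using Idl_top[OF X] h_top by simp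

end

definition u :: "complex mat \<Rightarrow> 'f" where
  "u p = h {p} (down (dc n {p}) p)"

lemma u_eq: assumes X: "commuting n X" and p: "p \<in> dc n X"
  shows "h X (down (dc n X) p) = u p"
proof -
  have pP: "p \<in> PC n" using p dc_PC by blast
  have X0: "commuting n {p}" by (rule commuting_single[OF pP])
  define T0 where "T0 = dc n {p}"
  define T where "T = dc n X"
  have sub: "T0 \<subseteq> T" unfolding T0_def T_def by (rule dc_single_sub[OF p])
  have pT0: "p \<in> T0" unfolding T0_def using dc_sub[OF X0] by blast
  have f: "pba_hom (Sub n T0) (Sub n T) (restrict id T0)" unfolding T0_def T_def
    by (rule incl_hom[OF X0]) (use sub in \<open>simp add: T0_def T_def\<close>)
  have g: "pba_hom (Sub n T) P (restrict id T)" unfolding T_def by (rule incl_hom_Proj[OF X])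
  have x0: "iv (Sub n T0) (down T0 p) \<in> fcarrier (F (Sub n T0))"
    unfolding T0_def by (rule iv_C[OF X0 down_ideal[OF X0]]) (use pT0 T0_def in simp)
  have comp: "compose T0 (restrict id T) (restrict id T0) = restrict id T0"
    unfolding compose_def by (rule restrict_ext) (use sub in auto)
  have "u p = Fm (Sub n T0) P (restrict id T0) (iv (Sub n T0) (down T0 p))"
    unfolding u_def h_def T0_def ..
  also have "\<dots> = Fm (Sub n T) P (restrict id T) (Fm (Sub n T0) (Sub n T) (restrict id T0) (iv (Sub n T0) (down T0 p)))"
    using Fm_comp[OF _ _ Proj_pba f g x0] Sub_dc_pba[OF X0] Sub_dc_pba[OF X] comp
    unfolding T0_def T_def by simp
  also have "Fm (Sub n T0) (Sub n T) (restrict id T0) (iv (Sub n T0) (down T0 p)) = iv (Sub n T) (down T p)"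
  proof -
    have hC: "Fm (Sub n T0) (Sub n T) (restrict id T0) (iv (Sub n T0) (down T0 p)) \<in> fcarrier (F (Sub n T))"
      using Fm_hom[OF _ _ f] Sub_dc_pba[OF X0] Sub_dc_pba[OF X] x0 unfolding frame_hom_def T0_def T_def
      by blast
    have "\<eta> (Sub n T) (Fm (Sub n T0) (Sub n T) (restrict id T0) (iv (Sub n T0) (down T0 p)))
        = Idl_map (Sub n T0) (Sub n T) (restrict id T0) (\<eta> (Sub n T0) (iv (Sub n T0) (down T0 p)))"
      using eta_nat[OF _ _ f x0] Sub_dc_boolean[OF X0] Sub_dc_boolean[OF X] unfolding T0_def T_def by blast
    also have "\<eta> (Sub n T0) (iv (Sub n T0) (down T0 p)) = down T0 p"
      unfolding T0_def by (rule eta_iv[OF X0 down_ideal[OF X0]]) (use pT0 T0_def in simp)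
    also have "Idl_map (Sub n T0) (Sub n T) (restrict id T0) (down T0 p) = down T p"
    proof
      show "Idl_map (Sub n T0) (Sub n T) (restrict id T0) (down T0 p) \<subseteq> down T p"
      proof
        fix b assume "b \<in> Idl_map (Sub n T0) (Sub n T) (restrict id T0) (down T0 p)"
        then obtain a where b: "b \<in> T" and a: "a \<in> T0" "a * p = a" and ba: "b * a = b"
          unfolding Idl_map_def down_def by auto
        have "b * p = b * a * p" using ba by simp
        also have "\<dots> = b * (a * p)"
          using assoc_mult_mat[OF Tc[OF X] Tc[OF X] Tc[OF X]] b a sub pT0 unfolding T_def by blast
        finally show "b \<in> down T p" using a ba b by (simp add: down_def)
      qed
      show "down T p \<subseteq> Idl_map (Sub n T0) (Sub n T) (restrict id T0) (down T0 p)"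
        using pT0 Ti[OF X0] unfolding Idl_map_def down_def T0_def by auto
    qed
    finally have "\<eta> (Sub n T) (Fm (Sub n T0) (Sub n T) (restrict id T0) (iv (Sub n T0) (down T0 p))) = down T p" .
    then show ?thesis using iv_eta[OF X hC[unfolded T_def]] unfolding T_def by simp
  qed
  finally show ?thesis unfolding h_def T_def by (simp only:)
qed

end

definition dg :: "nat \<Rightarrow> nat set \<Rightarrow> complex mat" where
  "dg n S = mat n n (\<lambda>(i, j). if i = j \<and> i \<in> S then 1 else 0)"

lemma dg_carrier: "dg n S \<in> carrier_mat n n" by (simp add: dg_def)

lemma dg_mult: "dg n S * dg n S' = dg n (S \<inter> S')"
proof (rule eq_matI)
  fix i j assume ij: "i < dim_row (dg n (S \<inter> S'))" "j < dim_col (dg n (S \<inter> S'))"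
  then have ij': "i < n" "j < n" by (auto simp: dg_def)
  have "(dg n S * dg n S') $$ (i, j) = (\<Sum>k<n. dg n S $$ (i, k) * dg n S' $$ (k, j))"
    by (rule mult_entry[OF dg_carrier dg_carrier ij'])
  also have "\<dots> = (\<Sum>k<n. if k = i then (if i = j \<and> i \<in> S \<and> i \<in> S' then 1 else 0) else 0)"
    by (rule sum.cong) (use ij' in \<open>auto simp: dg_def\<close>)
  also have "\<dots> = dg n (S \<inter> S') $$ (i, j)" using ij' by (simp add: dg_def)
  finally show "(dg n S * dg n S') $$ (i, j) = dg n (S \<inter> S') $$ (i, j)" .
qed (auto simp: dg_def)

lemma dg_join: "dg n S + dg n S' - dg n S * dg n S' = dg n (S \<union> S')"
  unfolding dg_mult by (rule eq_matI) (auto simp: dg_def)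

lemma dg_PC: "dg n S \<in> PC n"
proof -
  have "herm n (dg n S)" unfolding herm_def
  proof (intro allI impI)
    fix i j assume "i < n" "j < n"
    then show "dg n S $$ (i, j) = cnj (dg n S $$ (j, i))" by (cases "i = j") (auto simp: dg_def)
  qed
  then show ?thesis using dg_carrier dg_mult[of n S S] by (simp add: PC_iff)
qed

lemma dg_comm: "dg n S * dg n S' = dg n S' * dg n S"
  by (simp add: dg_mult Int_commute)

lemma dg_empty: "dg n {} = 0\<^sub>m n n" by (rule eq_matI) (auto simp: dg_def)
lemma dg_all: "dg n {0..<n} = 1\<^sub>m n" by (rule eq_matI) (auto simp: dg_def)

context setting begin

lemma u_C: assumes p: "p \<in> PC n" shows "u p \<in> fcarrier L"
proof -
  have X: "commuting n {p}" by (rule commuting_single[OF p])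
  show ?thesis unfolding u_def
    by (rule h_C[OF X down_ideal[OF X]]) (use dc_sub[OF X] in blast)
qed

lemma comm2: "p \<in> PC n \<Longrightarrow> q \<in> PC n \<Longrightarrow> p * q = q * p \<Longrightarrow> commuting n {p, q}"
  by (auto simp: commuting_def)

lemma u_meet: assumes "p \<in> PC n" "q \<in> PC n" "p * q = q * p"
  shows "u (p * q) = fmeet L (u p) (u q)"
proof -
  have X: "commuting n {p, q}" by (rule comm2[OF assms])
  have pq: "p \<in> dc n {p, q}" "q \<in> dc n {p, q}" using dc_sub[OF X] by auto
  show ?thesis
    using h_meet2[OF X pq] u_eq[OF X] pq dc_meet[OF X pq] by simp
qed

lemma u_join: assumes "p \<in> PC n" "q \<in> PC n" "p * q = q * p"
  shows "u (p + q - p * q) = fSup L {u p, u q}"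
proof -
  have X: "commuting n {p, q}" by (rule comm2[OF assms])
  have pq: "p \<in> dc n {p, q}" "q \<in> dc n {p, q}" using dc_sub[OF X] by auto
  show ?thesis
    using h_join2[OF X pq] u_eq[OF X] pq dc_join[OF X pq] by simp
qed

lemma comm0: "commuting n {}" by (simp add: commuting_def)

lemma u_zero: "u (0\<^sub>m n n) = fbot L"
  using h_zero[OF comm0] u_eq[OF comm0 dc_zero] by simp

lemma u_one: "u (1\<^sub>m n) = ftop L"
  using h_one[OF comm0] u_eq[OF comm0 dc_one] by simp

end

locale setting3 = setting +
  assumes KS: "\<And>i0 i1 i2. i0 < n \<Longrightarrow> i1 < n \<Longrightarrow> i2 < n \<Longrightarrow> i0 \<noteq> i1 \<Longrightarrow> i0 \<noteq> i2 \<Longrightarrow> i1 \<noteq> i2 \<Longrightarrow>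
     fle (F (Proj n)) (u (dg n {i0, i1, i2})) (fbot (F (Proj n)))"
  and n3: "n \<ge> 3"
begin

interpretation Lf: frm L using L_frame by (simp add: frm_def)

lemma single_bot: assumes i: "i < n" shows "fle L (u (dg n {i})) (fbot L)"
proof -
  define j where "j = (if i = 0 then 1 else (0::nat))"
  define k where "k = (if i \<le> 1 then 2 else (1::nat))"
  have jk: "j < n" "k < n" "i \<noteq> j" "i \<noteq> k" "j \<noteq> k" using n3 unfolding j_def k_def by auto
  have e: "dg n {i} * dg n {i, j, k} = dg n {i}" by (simp add: dg_mult)
  have "u (dg n {i}) = fmeet L (u (dg n {i})) (u (dg n {i, j, k}))"
    using u_meet[OF dg_PC dg_PC dg_comm] e by metis
  also have "fle L \<dots> (fbot L)"
    using Lf.trans[OF Lf.meet_C[OF u_C[OF dg_PC] u_C[OF dg_PC]] u_C[OF dg_PC] Lf.bot_C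
      Lf.meet_le2[OF u_C[OF dg_PC] u_C[OF dg_PC]] KS[OF i jk]] .
  finally show ?thesis .
qed

lemma all_bot: "finite S \<Longrightarrow> S \<subseteq> {0..<n} \<Longrightarrow> fle L (u (dg n S)) (fbot L)"
proof (induction S rule: finite_induct)
  case empty
  show ?case using Lf.refl[OF Lf.bot_C] by (simp add: dg_empty u_zero)
next
  case (insert i S)
  have e: "dg n (insert i S) = dg n {i} + dg n S - dg n {i} * dg n S" using dg_join[of n "{i}" S] by simp
  have "u (dg n (insert i S)) = fSup L {u (dg n {i}), u (dg n S)}"
    unfolding e by (rule u_join[OF dg_PC dg_PC dg_comm])
  also have "fle L \<dots> (fbot L)"
    by (rule Lf.join_least[OF u_C[OF dg_PC] u_C[OF dg_PC] Lf.bot_C])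
      (use insert single_bot in auto)
  finally show ?case .
qed

lemma trivial: "trivial_frame L"
proof -
  have "fle L (ftop L) (fbot L)" using all_bot[of "{0..<n}"] by (simp add: dg_all u_one)
  then show ?thesis unfolding trivial_frame_def
    using Lf.antisym[OF Lf.bot_C Lf.top_C Lf.bot_le[OF Lf.top_C]] by simp
qed

end

section \<open>Vector projections\<close>

definition cp :: "int \<times> int \<times> int \<Rightarrow> nat \<Rightarrow> int" where
  "cp v k = (if k = 0 then fst v else if k = 1 then fst (snd v) else snd (snd v))"

definition nrm :: "int \<times> int \<times> int \<Rightarrow> int" where
  "nrm v = fst v * fst v + fst (snd v) * fst (snd v) + snd (snd v) * snd (snd v)"

definition dotv :: "int \<times> int \<times> int \<Rightarrow> int \<times> int \<times> int \<Rightarrow> int" where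
  "dotv v w = fst v * fst w + fst (snd v) * fst (snd w) + snd (snd v) * snd (snd w)"

definition cond3 :: "int \<times> int \<times> int \<Rightarrow> int \<times> int \<times> int \<Rightarrow> int \<times> int \<times> int \<Rightarrow> bool" where
  "cond3 a b c \<longleftrightarrow> (\<forall>k\<in>{0,1,2}. \<forall>l\<in>{0,1,2}. cp a k * cp a l * nrm b * nrm c + cp b k * cp b l * nrm a * nrm c
      + cp c k * cp c l * nrm a * nrm b = (if k = l then nrm a * nrm b * nrm c else 0))"

context
  fixes n i0 i1 i2 :: nat
  assumes D: "i0 < n" "i1 < n" "i2 < n" "i0 \<noteq> i1" "i0 \<noteq> i2" "i1 \<noteq> i2"
begin

definition vi :: "int \<times> int \<times> int \<Rightarrow> nat \<Rightarrow> int" where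
  "vi v r = (if r = i0 then fst v else if r = i1 then fst (snd v) else if r = i2 then snd (snd v) else 0)"

definition Pm :: "int \<times> int \<times> int \<Rightarrow> complex mat" where
  "Pm v = mat n n (\<lambda>(r, s). of_int (vi v r * vi v s) / of_int (nrm v))"

lemma vi_simps: "vi v i0 = fst v" "vi v i1 = fst (snd v)" "vi v i2 = snd (snd v)"
  "r \<notin> {i0, i1, i2} \<Longrightarrow> vi v r = 0"
  using D by (auto simp: vi_def)

lemma sum3: assumes "\<And>t. t \<notin> {i0, i1, i2} \<Longrightarrow> g t = 0"
  shows "(\<Sum>t<n. g t) = g i0 + g i1 + g i2"
proof -
  have "(\<Sum>t<n. g t) = (\<Sum>t\<in>{i0, i1, i2}. g t)"
    by (rule sum.mono_neutral_right) (use D assms in auto)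
  also have "\<dots> = g i0 + g i1 + g i2" using D by (simp add: add.assoc)
  finally show ?thesis .
qed

lemma Pm_carrier: "Pm v \<in> carrier_mat n n" by (simp add: Pm_def)

lemma Pm_mult_entry: assumes rs: "r < n" "s < n"
  shows "(Pm v * Pm w) $$ (r, s) = of_int (vi v r * vi w s * dotv v w) / (of_int (nrm v) * of_int (nrm w))"
proof -
  have "(Pm v * Pm w) $$ (r, s) = (\<Sum>t<n. Pm v $$ (r, t) * Pm w $$ (t, s))"
    by (rule mult_entry[OF Pm_carrier Pm_carrier rs])
  also have "\<dots> = (\<Sum>t<n. (of_int (vi v r * vi v t) / of_int (nrm v)) * (of_int (vi w t * vi w s) / of_int (nrm w)))"
    by (rule sum.cong) (use rs in \<open>auto simp: Pm_def\<close>)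
  also have "\<dots> = (of_int (vi v r * vi v i0) / of_int (nrm v)) * (of_int (vi w i0 * vi w s) / of_int (nrm w))
     + (of_int (vi v r * vi v i1) / of_int (nrm v)) * (of_int (vi w i1 * vi w s) / of_int (nrm w))
     + (of_int (vi v r * vi v i2) / of_int (nrm v)) * (of_int (vi w i2 * vi w s) / of_int (nrm w))"
    by (rule sum3) (simp add: vi_simps)
  also have "\<dots> = of_int (vi v r * vi w s * dotv v w) / (of_int (nrm v) * of_int (nrm w))"
    unfolding vi_simps dotv_def by (simp add: algebra_simps add_divide_distrib)
  finally show ?thesis .
qed

lemma Pm_PC: assumes N: "nrm v \<noteq> 0" shows "Pm v \<in> PC n"
proof -
  have h: "herm n (Pm v)" unfolding herm_def
  proof (intro allI impI)
    fix r s assume "r < n" "s < n"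
    then show "Pm v $$ (r, s) = cnj (Pm v $$ (s, r))" by (simp add: Pm_def mult.commute)
  qed
  have dd: "dotv v v = nrm v" by (simp add: dotv_def nrm_def)
  have i: "Pm v * Pm v = Pm v"
  proof (rule eq_matI)
    fix r s assume "r < dim_row (Pm v)" "s < dim_col (Pm v)"
    then have rs: "r < n" "s < n" by (auto simp: Pm_def)
    show "(Pm v * Pm v) $$ (r, s) = Pm v $$ (r, s)"
      unfolding Pm_mult_entry[OF rs] dd using rs N by (simp add: Pm_def field_simps)
  qed (auto simp: Pm_def)
  show ?thesis using h i Pm_carrier by (simp add: PC_iff)
qed

lemma Pm_orth: assumes "dotv v w = 0" shows "Pm v * Pm w = 0\<^sub>m n n"
proof (rule eq_matI)
  fix r s assume "r < dim_row (0\<^sub>m n n :: complex mat)" "s < dim_col (0\<^sub>m n n :: complex mat)"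
  then have rs: "r < n" "s < n" by auto
  show "(Pm v * Pm w) $$ (r, s) = 0\<^sub>m n n $$ (r, s)" unfolding Pm_mult_entry[OF rs] using rs assms by simp
qed (auto simp: Pm_def)

lemma Pm_sum: assumes N: "nrm a \<noteq> 0" "nrm b \<noteq> 0" "nrm c \<noteq> 0" and c3: "cond3 a b c"
  shows "Pm a + Pm b + Pm c = dg n {i0, i1, i2}"
proof (rule eq_matI)
  fix r s assume "r < dim_row (dg n {i0, i1, i2})" "s < dim_col (dg n {i0, i1, i2})"
  then have rs: "r < n" "s < n" by (auto simp: dg_def)
  have lhs: "(Pm a + Pm b + Pm c) $$ (r, s) = of_int (vi a r * vi a s) / of_int (nrm a)
      + of_int (vi b r * vi b s) / of_int (nrm b) + of_int (vi c r * vi c s) / of_int (nrm c)"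
    using rs by (simp add: Pm_def)
  show "(Pm a + Pm b + Pm c) $$ (r, s) = dg n {i0, i1, i2} $$ (r, s)"
  proof (cases "r \<in> {i0, i1, i2} \<and> s \<in> {i0, i1, i2}")
    case False
    have z: "(\<forall>v. vi v r = 0) \<or> (\<forall>v. vi v s = 0)" using False vi_simps(4) by blast
    have "dg n {i0, i1, i2} $$ (r, s) = 0" using False rs by (auto simp: dg_def)
    moreover have "vi a r * vi a s = 0 \<and> vi b r * vi b s = 0 \<and> vi c r * vi c s = 0"
      using z by (elim disjE) (metis mult_zero_left mult_zero_right)+
    ultimately show ?thesis unfolding lhs by auto
  next
    case True
    define k where "k = (if r = i0 then 0 else if r = i1 then 1 else (2::nat))"
    define l where "l = (if s = i0 then 0 else if s = i1 then 1 else (2::nat))"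
    have kl: "k \<in> {0,1,2}" "l \<in> {0,1,2}" unfolding k_def l_def by auto
    have vk: "\<And>v. vi v r = cp v k" "\<And>v. vi v s = cp v l"
      using True D unfolding k_def l_def vi_def cp_def by auto
    have rskl: "(r = s) = (k = l)" using True D unfolding k_def l_def by auto
    have e: "cp a k * cp a l * nrm b * nrm c + cp b k * cp b l * nrm a * nrm c
      + cp c k * cp c l * nrm a * nrm b = (if k = l then nrm a * nrm b * nrm c else 0)"
      using c3 kl unfolding cond3_def by blast
    have e': "of_int (cp a k * cp a l) * of_int (nrm b) * of_int (nrm c) + of_int (cp b k * cp b l) * of_int (nrm a) * of_int (nrm c)
      + of_int (cp c k * cp c l) * of_int (nrm a) * of_int (nrm b) = (if k = l then of_int (nrm a) * of_int (nrm b) * of_int (nrm c) else (0::complex))"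
      using arg_cong[OF e, of "of_int :: int \<Rightarrow> complex"] by (auto split: if_splits)
    have "(Pm a + Pm b + Pm c) $$ (r, s) = (if k = l then 1 else 0)"
      unfolding lhs vk using N e' by (auto simp: field_simps split: if_splits)
    then show ?thesis using True rs rskl by (auto simp: dg_def)
  qed
qed (auto simp: Pm_def dg_def)

end

section \<open>Kochen--Specker data\<close>

definition ksv :: "(int \<times> int \<times> int) list" where "ksv = [(0, 0, 1), (0, 1, (-2)), (0, 1, (-1)), (0, 1, 0), (0, 1, 1), (0, 1, 2), (0, 2, (-1)), (0, 2, 1), (1, (-2), (-1)), (1, (-2), 0), (1, (-2), 1), (1, (-1), (-2)), (1, (-1), (-1)), (1, (-1), 0), (1, (-1), 1), (1, 0, (-2)), (1, 0, (-1)), (1, 0, 0), (1, 0, 1), (1, 1, (-2)), (1, 1, (-1)), (1, 1, 0), (1, 1, 1), (1, 2, (-1)), (1, 2, 0), (1, 2, 1), (2, (-1), 0), (2, (-1), 1), (2, 0, 1), (2, 1, 0), (2, 1, 1)]"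
definition ksp :: "(nat \<times> nat) list" where "ksp = [(13,22), (6,11), (5,10), (14,16), (0,17), (12,18), (7,19), (2,17), (23,26), (8,29), (10,29), (15,30), (9,30), (4,14), (2,22), (5,23), (12,21), (0,13), (13,20), (16,22), (0,21), (14,21), (4,17), (3,17), (4,20), (11,28), (1,25), (2,4), (24,27), (3,16), (16,18), (25,26), (2,12), (18,20), (0,3), (19,28), (15,27), (1,8), (3,18)]"
definition kst :: "(nat \<times> nat \<times> nat) list" where "kst = [(0,13,21), (1,7,17), (4,20,27), (3,16,18), (5,6,17), (11,14,21), (2,12,30), (0,24,26), (8,18,20), (13,19,22), (2,4,17), (0,9,29), (0,3,17), (10,16,22), (12,18,23), (14,16,25), (3,15,28)]"

lemma ks_comb: "\<And>v :: nat \<Rightarrow> bool. (\<exists>(i,j)\<in>set ksp. v i \<and> v j) \<or> (\<exists>(i,j,k)\<in>set kst. \<not> v i \<and> \<not> v j \<and> \<not> v k)"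
  unfolding ksp_def kst_def by (simp only: list.set insert_iff empty_iff bex_simps split_conv disj_imp simp_thms) sat

lemma ksv_len: "length ksv = 31" by (simp add: ksv_def)

lemma ksv_nz: "\<forall>v\<in>set ksv. nrm v \<noteq> 0"
  by code_simp

lemma ksp_ok: "\<forall>(i,j)\<in>set ksp. i < 31 \<and> j < 31 \<and> dotv (ksv ! i) (ksv ! j) = 0"
  by code_simp

lemma kst_ok: "\<forall>(i,j,k)\<in>set kst. i < 31 \<and> j < 31 \<and> k < 31 \<and> dotv (ksv ! i) (ksv ! j) = 0
   \<and> dotv (ksv ! i) (ksv ! k) = 0 \<and> dotv (ksv ! j) (ksv ! k) = 0 \<and> cond3 (ksv ! i) (ksv ! j) (ksv ! k)"
  by code_simp

lemma minus_zero_sq: "M \<in> carrier_mat n n \<Longrightarrow> M - 0\<^sub>m n n = (M :: complex mat)"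
  by (rule eq_matI) auto

lemma dotv_sym: "dotv v w = dotv w v" by (simp add: dotv_def mult.commute)

context setting begin

interpretation Lf: frm L using L_frame by (simp add: frm_def)

lemma KS_frame:
  assumes D: "i0 < n" "i1 < n" "i2 < n" "i0 \<noteq> i1" "i0 \<noteq> i2" "i1 \<noteq> i2"
  shows "fle L (u (dg n {i0, i1, i2})) (fbot L)"
proof -
  define V where "V i = Pm n i0 i1 i2 (ksv ! i)" for i
  define x where "x i = (if i < 31 then u (V i) else ftop L)" for i
  define y where "y i = (if i < 31 then u (1\<^sub>m n - V i) else fbot L)" for i
  define e where "e = u (dg n {i0, i1, i2})"
  have VP: "V i \<in> PC n" if "i < 31" for i
    unfolding V_def by (rule Pm_PC[OF D]) (use ksv_nz that ksv_len nth_mem in metis)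
  have Vc: "V i \<in> carrier_mat n n" for i unfolding V_def by (rule Pm_carrier[OF D])
  have Vi: "V i * V i = V i" if "i < 31" for i using VP[OF that] by (simp add: PC_iff)
  have xC: "x i \<in> fcarrier L" for i unfolding x_def using u_C VP Lf.top_C by auto
  have yC: "y i \<in> fcarrier L" for i unfolding y_def using u_C PC_neg VP Lf.bot_C by auto
  have eC: "e \<in> fcarrier L" unfolding e_def by (rule u_C[OF dg_PC])
  have cmV: "V i * (1\<^sub>m n - V i) = (1\<^sub>m n - V i) * V i" for i
    using m_comm_close(3)[OF Vc Vc Vc, of i i i] by simp
  have top: "fSup L {x i, y i} = ftop L" for i
  proof (cases "i < 31")
    case True
    have "u (V i + (1\<^sub>m n - V i) - V i * (1\<^sub>m n - V i)) = fSup L {u (V i), u (1\<^sub>m n - V i)}"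
      by (rule u_join[OF VP[OF True] PC_neg[OF VP[OF True]] cmV])
    then show ?thesis using m_compl(2)[OF Vc Vi[OF True]] True u_one by (simp add: x_def y_def)
  next
    case False
    have "fSup L {ftop L, fbot L} = ftop L"
      by (rule Lf.antisym[OF Lf.join_C[OF Lf.top_C Lf.bot_C] Lf.top_C])
        (auto intro: Lf.le_top Lf.join_C Lf.top_C Lf.bot_C Lf.join_le)
    then show ?thesis using False by (simp add: x_def y_def)
  qed
  have xy: "fmeet L (x i) (y i) = fbot L" if "i < 31" for i
  proof -
    have "u (V i * (1\<^sub>m n - V i)) = fmeet L (u (V i)) (u (1\<^sub>m n - V i))"
      by (rule u_meet[OF VP[OF that] PC_neg[OF VP[OF that]] cmV])
    then show ?thesis using m_compl(1)[OF Vc Vi[OF that]] that u_zero by (simp add: x_def y_def)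
  qed
  have orth: "V i * V j = 0\<^sub>m n n" if "dotv (ksv ! i) (ksv ! j) = 0" for i j
    unfolding V_def by (rule Pm_orth[OF D that])
  have pair: "fmeet L (x i) (x j) = fbot L" if "(i, j) \<in> set ksp" for i j
  proof -
    have ij: "i < 31" "j < 31" "dotv (ksv ! i) (ksv ! j) = 0" using ksp_ok that by auto
    have o1: "V i * V j = 0\<^sub>m n n" by (rule orth[OF ij(3)])
    have o2: "V j * V i = 0\<^sub>m n n" by (rule orth) (use ij(3) dotv_sym in simp)
    have "u (V i * V j) = fmeet L (u (V i)) (u (V j))"
      by (rule u_meet[OF VP[OF ij(1)] VP[OF ij(2)]]) (simp add: o1 o2)
    then show ?thesis using o1 u_zero ij by (simp add: x_def)
  qed
  have triple: "e = fSup L {fSup L {x i, x j}, x k}" if "(i, j, k) \<in> set kst" for i j k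
  proof -
    have ijk: "i < 31" "j < 31" "k < 31" "dotv (ksv ! i) (ksv ! j) = 0"
      "dotv (ksv ! i) (ksv ! k) = 0" "dotv (ksv ! j) (ksv ! k) = 0" "cond3 (ksv ! i) (ksv ! j) (ksv ! k)"
      using kst_ok that by auto
    have oij: "V i * V j = 0\<^sub>m n n" "V j * V i = 0\<^sub>m n n"
      using orth ijk dotv_sym by metis+
    have oik: "V i * V k = 0\<^sub>m n n" "V k * V i = 0\<^sub>m n n"
      using orth ijk dotv_sym by metis+
    have ojk: "V j * V k = 0\<^sub>m n n" "V k * V j = 0\<^sub>m n n"
      using orth ijk dotv_sym by metis+
    have AB: "V i + V j - V i * V j = V i + V j" using oij minus_zero_sq[of "V i + V j" n] Vc by simp
    have ABP: "V i + V j \<in> PC n" using PC_join[OF VP[OF ijk(1)] VP[OF ijk(2)]] oij AB by simp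
    have uAB: "u (V i + V j) = fSup L {x i, x j}"
      using u_join[OF VP[OF ijk(1)] VP[OF ijk(2)]] oij AB ijk by (simp add: x_def)
    have c1: "(V i + V j) * V k = 0\<^sub>m n n"
      using add_mult_distrib_mat[OF Vc Vc Vc, of i j k] oik ojk by simp
    have c2: "V k * (V i + V j) = 0\<^sub>m n n"
      using mult_add_distrib_mat[OF Vc Vc Vc, of k i j] oik ojk by simp
    have "u (V i + V j + V k - (V i + V j) * V k) = fSup L {u (V i + V j), u (V k)}"
      by (rule u_join[OF ABP VP[OF ijk(3)]]) (simp add: c1 c2)
    moreover have "V i + V j + V k - (V i + V j) * V k = dg n {i0, i1, i2}"
    proof -
      have "V i + V j + V k = dg n {i0, i1, i2}"
        unfolding V_def by (rule Pm_sum[OF D]) (use ksv_nz ksv_len nth_mem ijk in metis)+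
      then show ?thesis using c1 minus_zero_sq[OF dg_carrier, of n "{i0, i1, i2}"] by simp
    qed
    ultimately show ?thesis using uAB ijk by (simp add: e_def x_def)
  qed
  have all: "fle L (Lf.Mf x y e v 31) (fbot L)" for v
  proof -
    have MC: "Lf.Mf x y e v 31 \<in> fcarrier L" by (rule Lf.Mf_C[OF xC yC eC])
    have lit: "fle L (Lf.Mf x y e v 31) (Lf.lt x y v i)" if "i < 31" for i
      by (rule Lf.Mf_le_lit[OF xC yC eC that])
    from ks_comb[of v] show ?thesis
    proof (elim disjE bexE)
      fix pr assume pr: "pr \<in> set ksp" and h: "case pr of (i, j) \<Rightarrow> v i \<and> v j"
      obtain i j where pij: "pr = (i, j)" by (cases pr)
      have ij: "i < 31" "j < 31" using ksp_ok pr pij by auto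
      have vv: "v i" "v j" using h pij by auto
      show ?thesis
        by (rule Lf.pair_leaf[OF MC xC xC _ _ pair[OF pr[unfolded pij]]])
          (use lit[OF ij(1)] lit[OF ij(2)] vv in \<open>simp_all add: Lf.lt_def\<close>)
    next
      fix tr assume tr: "tr \<in> set kst" and h: "case tr of (i, j, k) \<Rightarrow> \<not> v i \<and> \<not> v j \<and> \<not> v k"
      obtain i j k where tijk: "tr = (i, j, k)" by (cases tr) auto
      have ijk: "i < 31" "j < 31" "k < 31" using kst_ok tr tijk by auto
      have vv: "\<not> v i" "\<not> v j" "\<not> v k" using h tijk by auto
      have le_e: "fle L (Lf.Mf x y e v 31) (fSup L {fSup L {x i, x j}, x k})"
      proof -
        have t: "e = fSup L {fSup L {x i, x j}, x k}" by (rule triple[OF tr[unfolded tijk]])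
        have "fle L (Lf.Mf x y e v 31) e" by (rule Lf.Mf_le_a[OF xC yC eC])
        then show ?thesis by (simp only: t[symmetric])
      qed
      have ob: "fle L (fmeet L (x i) (y i)) (fbot L)" "fle L (fmeet L (x j) (y j)) (fbot L)"
        "fle L (fmeet L (x k) (y k)) (fbot L)"
        using xy[OF ijk(1)] xy[OF ijk(2)] xy[OF ijk(3)] Lf.refl[OF Lf.bot_C] by simp_all
      show ?thesis
        by (rule Lf.triple_leaf[OF MC xC xC xC yC yC yC le_e _ _ _ ob])
          (use lit[OF ijk(1)] lit[OF ijk(2)] lit[OF ijk(3)] vv in \<open>simp_all add: Lf.lt_def\<close>)
    qed
  qed
  have "fle L e (fbot L)" by (rule Lf.expand[OF xC yC top eC all])
  then show ?thesis unfolding e_def .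
qed

end

theorem mainTheorem9:
  fixes F :: "complex mat pba \<Rightarrow> 'f frame"
    and Fm :: "complex mat pba \<Rightarrow> complex mat pba \<Rightarrow> (complex mat \<Rightarrow> complex mat) \<Rightarrow> 'f \<Rightarrow> 'f"
    and \<eta> :: "complex mat pba \<Rightarrow> 'f \<Rightarrow> complex mat set"
    and n :: nat
  assumes "is_PBool_Loc_functor F Fm"
    and "nat_iso_to_Stone F Fm \<eta>"
    and "n \<ge> 3"
  shows "trivial_frame (F (Proj n))"
proof -
  interpret S: setting F Fm \<eta> n by unfold_locales (rule assms)+
  interpret S3: setting3 F Fm \<eta> n
    by unfold_locales (use S.KS_frame assms(3) in auto)
  show ?thesis by (rule S3.trivial)
qed

end
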